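(* Let $k\ge 4$ and let $f,\tilde f$ be CNF formulas whose literal-clause graphs with negation connections $\mathrm{LCN}(f)$ and $\mathrm{LCN}(\tilde f)$ are indistinguishable by the $k$-WL test. Then for every partial assignment $\sigma$ of the variables of $f$ that sets at most $\lfloor k/2\rfloor-1$ variables, there exists a partial assignment $\tilde\sigma$ of the variables of $\tilde f$ such that $\mathrm{LCN}(\sigma(f))$ and $\mathrm{LCN}(\tilde\sigma(\tilde f))$ are indistinguishable by the (1-dimensional) WL test.
   Context: Literals, clauses (sets of literals, read as disjunctions) and CNF formulas (sets of clauses, read as conjunctions) are as usual. For a CNF formula $f$ on variables $x_1,\dots,x_n$, $\mathrm{LCN}(f)$ is the edge-colored graph whose vertices are the $2n$ literals $x_i,\neg x_i$ and one vertex per clause, with a "literal-clause" colored edge $\{\ell,c\}$ whenever $\ell\in c$ and a differently colored "literal-literal" edge $\{x_i,\neg x_i\}$ for each $i$; vertices carry no labels. For a partial assignment $\sigma$, $\mathrm{LCN}(\sigma(f))$ is $\mathrm{LCN}(f)$ in which each literal vertex set to true by $\sigma$ receives the vertex label $\top$, each literal set to false receives the label $\bot$, and all other vertices carry a common default label. WL test (with vertex and edge colors): $\chi^0$ is the vertex labeling; $\chi^\ell(v)=(\chi^{\ell-1}(v),(\{\!\{\chi^{\ell-1}(w):w\in N_c(v)\}\!\})_{c})$, where $N_c(v)$ is the set of neighbors of $v$ via edges of color $c$, iterated until the partition stabilizes; it is run on the disjoint union of two graphs, and they are distinguished iff some color occurs a different number of times among the vertices of the two graphs. $k$-WL test: the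 atomic type of $\bar v\in V(G)^k$ is determined by the colored induced subgraph on its entries (tuples have equal type iff $v_i\mapsto u_i$ is an isomorphism of the colored induced subgraphs); $\chi^0(\bar v)$ is the atomic type and $\chi^\ell(\bar v)=(\chi^{\ell-1}(\bar v),\chi^{\ell-1}_1(\bar v),\dots,\chi^{\ell-1}_k(\bar v))$ with $\chi^{\ell-1}_i(\bar v)=\{\!\{\chi^{\ell-1}(v_1,..,v_{i-1},u,v_{i+1},..,v_k):u\in V\}\!\}$, until stable; run on the disjoint union, two graphs are distinguished iff some color class has different numbers of tuples from the two graphs. *)

theory Defs
  imports Main "HOL-Library.Multiset"
begin

record ('v, 'l, 'c) cgraph =
  verts :: "'v set"
  lab   :: "'v \<Rightarrow> 'l"
  edge  :: "'v \<Rightarrow> 'v \<Rightarrow> 'c option"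

definition disj_union ::
  "('v, 'l, 'c) cgraph \<Rightarrow> ('w, 'l, 'c) cgraph \<Rightarrow> ('v + 'w, 'l, 'c) cgraph" where
  "disj_union G H =
     \<lparr> verts = Inl ` verts G \<union> Inr ` verts H,
       lab = case_sum (lab G) (lab H),
       edge = (\<lambda>x y. case (x, y) of
                 (Inl u, Inl v) \<Rightarrow> edge G u v
               | (Inr u, Inr v) \<Rightarrow> edge H u v
               | _ \<Rightarrow> None) \<rparr>"

datatype ('l, 'c) wlcol =
  WBase 'l
| WStep "('l, 'c) wlcol" "'c \<Rightarrow> ('l, 'c) wlcol multiset"

fun wl_col :: "('v, 'l, 'c) cgraph \<Rightarrow> nat \<Rightarrow> 'v \<Rightarrow> ('l, 'c) wlcol" where
  "wl_col G 0 v = WBase (lab G v)"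
| "wl_col G (Suc n) v =
     WStep (wl_col G n v)
       (\<lambda>c. image_mset (wl_col G n) (mset_set {w \<in> verts G. edge G v w = Some c}))"

definition wl_part :: "('v, 'l, 'c) cgraph \<Rightarrow> nat \<Rightarrow> ('v \<times> 'v) set" where
  "wl_part G n = {(u, v). u \<in> verts G \<and> v \<in> verts G \<and> wl_col G n u = wl_col G n v}"

definition wl_stable_round :: "('v, 'l, 'c) cgraph \<Rightarrow> nat" where
  "wl_stable_round G = (LEAST n. wl_part G (Suc n) = wl_part G n)"

definition wl_distinguishes :: "('v, 'l, 'c) cgraph \<Rightarrow> ('w, 'l, 'c) cgraph \<Rightarrow> bool" where
  "wl_distinguishes G H =
     (let U = disj_union G H; m = wl_stable_round U in
      \<exists>c. card {v \<in> verts G. wl_col U m (Inl v) = c} \<noteq> card {v \<in> verts H. wl_col U m (Inr v) = c})"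

text \<open>Two tuples have
  the same atomic type iff \<open>v_i \<mapsto> u_i\<close> is an isomorphism of the coloured induced subgraphs.\<close>

definition atp :: "('v, 'l, 'c) cgraph \<Rightarrow> 'v list \<Rightarrow> 'l list \<times> (bool \<times> 'c option) list list" where
  "atp G vs = (map (lab G) vs, map (\<lambda>a. map (\<lambda>b. (a = b, edge G a b)) vs) vs)"

datatype ('l, 'c) kcol =
  KBase "'l list \<times> (bool \<times> 'c option) list list"
| KStep "('l, 'c) kcol" "('l, 'c) kcol multiset list"

fun kwl_col :: "nat \<Rightarrow> ('v, 'l, 'c) cgraph \<Rightarrow> nat \<Rightarrow> 'v list \<Rightarrow> ('l, 'c) kcol" where
  "kwl_col k G 0 vs = KBase (atp G vs)"
| "kwl_col k G (Suc n) vs =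
     KStep (kwl_col k G n vs)
       (map (\<lambda>i. image_mset (\<lambda>u. kwl_col k G n (vs[i := u])) (mset_set (verts G))) [0..<k])"

definition ktuples :: "nat \<Rightarrow> 'v set \<Rightarrow> 'v list set" where
  "ktuples k V = {vs. length vs = k \<and> set vs \<subseteq> V}"

definition kwl_part :: "nat \<Rightarrow> ('v, 'l, 'c) cgraph \<Rightarrow> nat \<Rightarrow> ('v list \<times> 'v list) set" where
  "kwl_part k G n = {(us, vs). us \<in> ktuples k (verts G) \<and> vs \<in> ktuples k (verts G)
                               \<and> kwl_col k G n us = kwl_col k G n vs}"

definition kwl_stable_round :: "nat \<Rightarrow> ('v, 'l, 'c) cgraph \<Rightarrow> nat" where
  "kwl_stable_round k G = (LEAST n. kwl_part k G (Suc n) = kwl_part k G n)"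

definition kwl_distinguishes :: "nat \<Rightarrow> ('v, 'l, 'c) cgraph \<Rightarrow> ('w, 'l, 'c) cgraph \<Rightarrow> bool" where
  "kwl_distinguishes k G H =
     (let U = disj_union G H; m = kwl_stable_round k U in
      \<exists>c. card {vs \<in> ktuples k (verts G). kwl_col k U m (map Inl vs) = c}
          \<noteq> card {vs \<in> ktuples k (verts H). kwl_col k U m (map Inr vs) = c})"

text \<open>Variables are \<open>0..<nvars\<close>; a literal \<open>(i, True)\<close> is \<open>x_i\<close>, \<open>(i, False)\<close> is \<open>\<not>x_i\<close>.\<close>

type_synonym lit = "nat \<times> bool"

record cnf =
  nvars :: nat
  clauses :: "lit set set"

definition wf_cnf :: "cnf \<Rightarrow> bool" where
  "wf_cnf f \<longleftrightarrow> finite (clauses f) \<and>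
     (\<forall>c \<in> clauses f. \<forall>(i, p) \<in> c. i < nvars f)"

datatype ecol = LitClause | LitLit

text \<open>Vertex labels: \<open>Some True\<close> = \<top>, \<open>Some False\<close> = \<bottom>, \<open>None\<close> = default label.
  A partial assignment is a map from variables to truth values.\<close>

definition LCN_assign :: "cnf \<Rightarrow> (nat \<rightharpoonup> bool) \<Rightarrow> (lit + lit set, bool option, ecol) cgraph" where
  "LCN_assign f \<sigma> =
     \<lparr> verts = Inl ` {(i, p). i < nvars f} \<union> Inr ` clauses f,
       lab = (\<lambda>x. case x of
                Inl (i, p) \<Rightarrow> (case \<sigma> i of None \<Rightarrow> None | Some b \<Rightarrow> Some (b = p))
              | Inr _ \<Rightarrow> None),
       edge = (\<lambda>x y. case (x, y) of
                 (Inl l, Inr c) \<Rightarrow> (if l \<in> c then Some LitClause else None)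
               | (Inr c, Inl l) \<Rightarrow> (if l \<in> c then Some LitClause else None)
               | (Inl (i, p), Inl (j, q)) \<Rightarrow> (if i = j \<and> p \<noteq> q then Some LitLit else None)
               | _ \<Rightarrow> None) \<rparr>"

definition LCN :: "cnf \<Rightarrow> (lit + lit set, bool option, ecol) cgraph" where
  "LCN f = LCN_assign f Map.empty"

end

theory Submission
  imports Defs
begin

lemma GL2:
  assumes cross: "\<And>x y. x \<in># A \<Longrightarrow> y \<in># B \<Longrightarrow> k x = k y \<Longrightarrow> f x = g y"
    and inA: "\<And>x y. x \<in># A \<Longrightarrow> y \<in># A \<Longrightarrow> k x = k y \<Longrightarrow> f x = f y"
    and inB: "\<And>x y. x \<in># B \<Longrightarrow> y \<in># B \<Longrightarrow> k x = k y \<Longrightarrow> g x = g y"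
    and eq: "image_mset k A = image_mset k B"
  shows "image_mset f A = image_mset g B"
proof -
  define h where "h z = (if \<exists>x. x \<in># A \<and> k x = z then f (SOME x. x \<in># A \<and> k x = z)
                         else g (SOME y. y \<in># B \<and> k y = z))" for z
  have hA: "f x = h (k x)" if xA: "x \<in># A" for x
  proof -
    have ex: "\<exists>x'. x' \<in># A \<and> k x' = k x" using xA by blast
    define x0 where "x0 = (SOME x'. x' \<in># A \<and> k x' = k x)"
    have x0: "x0 \<in># A \<and> k x0 = k x" unfolding x0_def by (rule someI_ex[OF ex])
    have "h (k x) = f x0" unfolding h_def x0_def using ex by (simp only: if_True)
    moreover have "f x = f x0" using inA[OF xA] x0 by simp
    ultimately show ?thesis by simp
  qed
  have hB: "g y = h (k y)" if yB: "y \<in># B" for y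
  proof (cases "\<exists>x. x \<in># A \<and> k x = k y")
    case True
    define x0 where "x0 = (SOME x'. x' \<in># A \<and> k x' = k y)"
    have x0: "x0 \<in># A \<and> k x0 = k y" unfolding x0_def by (rule someI_ex[OF True])
    have "h (k y) = f x0" unfolding h_def x0_def using True by (simp only: if_True)
    moreover have "f x0 = g y" using cross[OF _ yB] x0 by simp
    ultimately show ?thesis by simp
  next
    case False
    have ex: "\<exists>x'. x' \<in># B \<and> k x' = k y" using yB by blast
    define y0 where "y0 = (SOME x'. x' \<in># B \<and> k x' = k y)"
    have y0: "y0 \<in># B \<and> k y0 = k y" unfolding y0_def by (rule someI_ex[OF ex])
    have "h (k y) = g y0" unfolding h_def y0_def using False by (simp only: if_False)
    moreover have "g y = g y0" using inB[OF yB] y0 by simp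
    ultimately show ?thesis by simp
  qed
  have 1: "image_mset f A = image_mset (h \<circ> k) A"
    using hA by (intro image_mset_cong) auto
  have 2: "image_mset g B = image_mset (h \<circ> k) B"
    using hB by (intro image_mset_cong) auto
  have "image_mset f A = image_mset h (image_mset k A)" unfolding 1 multiset.map_comp ..
  also have "\<dots> = image_mset h (image_mset k B)" using eq by (rule arg_cong)
  also have "\<dots> = image_mset g B" unfolding 2 multiset.map_comp ..
  finally show ?thesis .
qed

section \<open>Partial-tuple colouring\<close>

type_synonym ('l,'c) oatp = "(nat \<Rightarrow> 'l option) \<times> (nat \<Rightarrow> nat \<Rightarrow> bool \<times> 'c option)"

definition zo :: "'v option list \<Rightarrow> nat \<Rightarrow> 'v option" where
  "zo zs a = (if a < length zs then zs ! a else None)"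

definition edgeo :: "('v,'l,'c) cgraph \<Rightarrow> 'v option \<Rightarrow> 'v option \<Rightarrow> 'c option" where
  "edgeo G x y = (case (x, y) of (Some a, Some b) \<Rightarrow> edge G a b | _ \<Rightarrow> None)"

definition atpo :: "('v,'l,'c) cgraph \<Rightarrow> 'v option list \<Rightarrow> ('l,'c) oatp" where
  "atpo G zs = (\<lambda>a. map_option (lab G) (zo zs a),
                \<lambda>a b. (zo zs a = zo zs b, edgeo G (zo zs a) (zo zs b)))"

datatype ('l,'c) pcol = PBase "('l,'c) oatp" | PStep "('l,'c) pcol" "('l,'c) pcol multiset list"

fun col :: "('v,'l,'c) cgraph \<Rightarrow> 'v set \<Rightarrow> nat \<Rightarrow> 'v option list \<Rightarrow> ('l,'c) pcol" where
  "col G S 0 zs = PBase (atpo G zs)"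
| "col G S (Suc n) zs = PStep (col G S n zs)
     (map (\<lambda>i. image_mset (\<lambda>u. col G S n (zs[i := u])) (mset_set (insert None (Some ` S)))) [0..<length zs])"

fun base :: "('l,'c) pcol \<Rightarrow> ('l,'c) oatp" where
  "base (PBase a) = a"
| "base (PStep c _) = base c"

fun prev :: "('l,'c) pcol \<Rightarrow> ('l,'c) pcol" where
  "prev (PStep c _) = c"
| "prev c = c"

fun msi :: "('l,'c) pcol \<Rightarrow> nat \<Rightarrow> ('l,'c) pcol multiset" where
  "msi (PStep _ ms) i = ms ! i"
| "msi _ i = {#}"

lemma base_col[simp]: "base (col G S n zs) = atpo G zs"
  by (induction n) auto

lemma prev_col[simp]: "prev (col G S (Suc n) zs) = col G S n zs" by simp

lemma msi_col: "i < length zs \<Longrightarrow> msi (col G S (Suc n) zs) i =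
   image_mset (\<lambda>u. col G S n (zs[i := u])) (mset_set (insert None (Some ` S)))"
  by simp

lemma mset_set_opt: "finite S \<Longrightarrow> mset_set (insert None (Some ` S)) = add_mset None (image_mset Some (mset_set S))"
  by (simp add: image_mset_mset_set inj_on_def)

definition maskl :: "nat set \<Rightarrow> 'v option list \<Rightarrow> 'v option list" where
  "maskl I zs = map (\<lambda>j. if j \<in> I then None else zs ! j) [0..<length zs]"

lemma length_maskl[simp]: "length (maskl I zs) = length zs" by (simp add: maskl_def)

lemma maskl_upd: "i < length zs \<Longrightarrow> (maskl I zs)[i := u] = maskl (I - {i}) (zs[i := u])"
  by (auto simp: maskl_def intro!: nth_equalityI simp: nth_list_update)

lemma maskl_upd_None: "i < length zs \<Longrightarrow> (maskl I zs)[i := None] = maskl (insert i I) zs"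
  by (auto simp: maskl_def intro!: nth_equalityI simp: nth_list_update)

lemma maskl_empty[simp]: "maskl {} zs = zs"
  by (auto simp: maskl_def intro!: nth_equalityI)

definition mk :: "nat set \<Rightarrow> ('l,'c) oatp \<Rightarrow> ('l,'c) oatp" where
  "mk I a = (\<lambda>x. if x \<in> I then None else fst a x,
             \<lambda>x y. if x \<in> I \<or> y \<in> I then ((x \<in> I \<or> fst a x = None) \<and> (y \<in> I \<or> fst a y = None), None)
                   else snd a x y)"

fun Dc :: "nat set \<Rightarrow> nat \<Rightarrow> ('l,'c) pcol \<Rightarrow> ('l,'c) pcol" where
  "Dc I 0 c = (case c of PBase a \<Rightarrow> PBase (mk I a) | _ \<Rightarrow> undefined)"
| "Dc I (Suc n) c = (case c of PStep c0 ms \<Rightarrow>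
      PStep (Dc I n c0) (map (\<lambda>i. image_mset (Dc (I - {i}) n) (ms ! i)) [0..<length ms]) | _ \<Rightarrow> undefined)"

lemma zo_maskl: "zo (maskl I zs) a = (if a \<in> I then None else zo zs a)"
  by (simp add: zo_def maskl_def)

lemma atpo_maskl: "atpo G (maskl I zs) = mk I (atpo G zs)"
  unfolding atpo_def mk_def
  by (auto simp: zo_maskl edgeo_def fun_eq_iff split: option.splits)

lemma col_maskl: "col G S n (maskl I zs) = Dc I n (col G S n zs)"
proof (induction n arbitrary: I zs)
  case 0
  then show ?case by (simp add: atpo_maskl)
next
  case (Suc n)
  show ?case
    by (auto simp: Suc maskl_upd image_mset.compositionality o_def intro!: image_mset_cong)
qed

section \<open>From kwl_col to col\<close>

definition cv :: "nat set \<Rightarrow> 'l list \<times> (bool \<times> 'c option) list list \<Rightarrow> ('l,'c) oatp" where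
  "cv I a = (\<lambda>x. if x < length (fst a) \<and> x \<notin> I then Some (fst a ! x) else None,
             \<lambda>x y. if (x < length (fst a) \<and> x \<notin> I) \<and> (y < length (fst a) \<and> y \<notin> I) then snd a ! x ! y
                   else (\<not> (x < length (fst a) \<and> x \<notin> I) \<and> \<not> (y < length (fst a) \<and> y \<notin> I), None))"

fun Dk :: "nat \<Rightarrow> nat set \<Rightarrow> nat \<Rightarrow> ('l,'c) kcol \<Rightarrow> ('l,'c) pcol" where
  "Dk k I 0 c = (case c of KBase a \<Rightarrow> PBase (cv I a) | _ \<Rightarrow> undefined)"
| "Dk k I (Suc n) c = (case c of KStep c0 ms \<Rightarrow>
      PStep (Dk k I n c0) (map (\<lambda>i. add_mset (Dk k (insert i I) n c0) (image_mset (Dk k (I - {i}) n) (ms ! i))) [0..<k])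
    | _ \<Rightarrow> undefined)"

lemma atpo_maskl_Some: "atpo G (maskl I (map Some zs)) = cv I (atp G zs)"
  unfolding atpo_def cv_def atp_def
  by (auto simp: zo_def maskl_def edgeo_def fun_eq_iff)

lemma col_kwl:
  assumes "finite (verts G)"
  shows "length zs = k \<Longrightarrow> set zs \<subseteq> verts G \<Longrightarrow>
    col G (verts G) n (maskl I (map Some zs)) = Dk k I n (kwl_col k G n zs)"
proof (induction n arbitrary: I zs)
  case 0
  then show ?case by (simp add: atpo_maskl_Some)
next
  case (Suc n)
  have "image_mset (\<lambda>u. col G (verts G) n ((maskl I (map Some zs))[i := u])) (mset_set (insert None (Some ` verts G)))
     = add_mset (Dk k (insert i I) n (kwl_col k G n zs))
        (image_mset (Dk k (I - {i}) n) (image_mset (\<lambda>u. kwl_col k G n (zs[i := u])) (mset_set (verts G))))"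
    if i: "i < k" for i
  proof -
    have 1: "col G (verts G) n ((maskl I (map Some zs))[i := None]) = Dk k (insert i I) n (kwl_col k G n zs)"
      using i Suc by (simp add: maskl_upd_None)
    have 2: "col G (verts G) n ((maskl I (map Some zs))[i := Some v]) = Dk k (I - {i}) n (kwl_col k G n (zs[i := v]))"
      if "v \<in> verts G" for v
    proof -
      have "(maskl I (map Some zs))[i := Some v] = maskl (I - {i}) (map Some (zs[i := v]))"
        using i Suc.prems by (simp add: maskl_upd map_update)
      moreover have "set (zs[i := v]) \<subseteq> verts G" using Suc.prems that
        by (meson dual_order.trans set_update_subset_insert insert_subset)
      ultimately show ?thesis using Suc.IH Suc.prems by simp
    qed
    have 3: "image_mset (\<lambda>v. col G (verts G) n ((maskl I (map Some zs))[i := Some v])) (mset_set (verts G))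
        = image_mset (\<lambda>v. Dk k (I - {i}) n (kwl_col k G n (zs[i := v]))) (mset_set (verts G))"
      by (rule image_mset_cong) (use 2 assms in auto)
    show ?thesis
      unfolding mset_set_opt[OF assms] image_mset_add_mset image_mset.compositionality 1 o_def
      using 3 by (simp add: image_mset.compositionality o_def)
  qed
  note step = this
  have len: "length (maskl I (map Some zs)) = k" using Suc.prems by simp
  show ?case
    unfolding col.simps kwl_col.simps Dk.simps kcol.case len
  proof (rule arg_cong2[where f=PStep])
    show "col G (verts G) n (maskl I (map Some zs)) = Dk k I n (kwl_col k G n zs)"
      using Suc by simp
    show "map (\<lambda>i. image_mset (\<lambda>u. col G (verts G) n ((maskl I (map Some zs))[i := u]))
            (mset_set (insert None (Some ` verts G)))) [0..<k] =
          map (\<lambda>i. add_mset (Dk k (insert i I) n (kwl_col k G n zs))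
            (image_mset (Dk k (I - {i}) n)
              (map (\<lambda>i. image_mset (\<lambda>u. kwl_col k G n (zs[i := u])) (mset_set (verts G))) [0..<k] ! i))) [0..<k]"
      by (rule map_cong) (auto simp: step)
  qed
qed

section \<open>Decomposition over a disjoint union\<close>

definition pl1 :: "('a + 'b) option \<Rightarrow> ('a + 'b) option" where
  "pl1 x = (case x of Some (Inl a) \<Rightarrow> Some (Inl a) | _ \<Rightarrow> None)"
definition pr1 :: "('a + 'b) option \<Rightarrow> ('a + 'b) option" where
  "pr1 x = (case x of Some (Inr a) \<Rightarrow> Some (Inr a) | _ \<Rightarrow> None)"

definition piL :: "('a + 'b) option list \<Rightarrow> ('a + 'b) option list" where
  "piL zs = map pl1 zs"
definition piR :: "('a + 'b) option list \<Rightarrow> ('a + 'b) option list" where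
  "piR zs = map pr1 zs"

lemma length_piL[simp]: "length (piL zs) = length zs" by (simp add: piL_def)
lemma length_piR[simp]: "length (piR zs) = length zs" by (simp add: piR_def)
lemma piL_upd: "piL (zs[i := u]) = (piL zs)[i := pl1 u]" by (simp add: piL_def map_update)
lemma piR_upd: "piR (zs[i := u]) = (piR zs)[i := pr1 u]" by (simp add: piR_def map_update)

definition key where
  "key G SL SR n zs = {#col G SL n (piL zs), col G SR n (piR zs)#}"

definition nel :: "nat \<Rightarrow> ('l,'c) pcol multiset \<Rightarrow> ('l,'c) pcol" where
  "nel i M = (SOME x. x \<in># M \<and> fst (base x) i = None)"

lemma nel_eq:
  assumes "M = add_mset x N" "fst (base x) i = None" "\<forall>y\<in>#N. fst (base y) i \<noteq> None"
  shows "nel i M = x"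
proof -
  have ex: "\<exists>y. y \<in># M \<and> fst (base y) i = None" using assms by auto
  have "nel i M \<in># M \<and> fst (base (nel i M)) i = None"
    unfolding nel_def by (rule someI_ex[OF ex])
  then show ?thesis using assms by auto
qed

lemma zo_upd: "i < length zs \<Longrightarrow> zo (zs[i := u]) j = (if j = i then u else zo zs j)"
  by (simp add: zo_def nth_list_update)

lemma msi_split:
  assumes "finite S" "i < length zs"
  shows "msi (col G S (Suc n) zs) i =
     add_mset (col G S n (zs[i := None])) (image_mset (\<lambda>x. col G S n (zs[i := Some x])) (mset_set S))"
  unfolding msi_col[OF assms(2)] mset_set_opt[OF assms(1)] image_mset_add_mset multiset.map_comp o_def by simp

lemma nel_col:
  assumes "finite S" "i < length zs"
  shows "nel i (msi (col G S (Suc n) zs) i) = col G S n (zs[i := None])"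
    and "msi (col G S (Suc n) zs) i - {#nel i (msi (col G S (Suc n) zs) i)#} =
         image_mset (\<lambda>x. col G S n (zs[i := Some x])) (mset_set S)"
proof -
  have "nel i (msi (col G S (Suc n) zs) i) = col G S n (zs[i := None])"
    by (rule nel_eq[OF msi_split[OF assms]]) (use assms in \<open>auto simp: atpo_def zo_upd\<close>)
  note n = this
  then show "nel i (msi (col G S (Suc n) zs) i) = col G S n (zs[i := None])" .
  show "msi (col G S (Suc n) zs) i - {#nel i (msi (col G S (Suc n) zs) i)#} =
         image_mset (\<lambda>x. col G S n (zs[i := Some x])) (mset_set S)"
    unfolding n unfolding msi_split[OF assms] by simp
qed

lemma msi_minus:
  assumes "finite S" "i < length zs"
  shows "msi (col G S (Suc n) zs) i - {#col G S n (zs[i := None])#} =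
         image_mset (\<lambda>x. col G S n (zs[i := Some x])) (mset_set S)"
  using nel_col(2)[OF assms, of G n] by (simp only: nel_col(1)[OF assms])

definition Kf where
  "Kf i a b = (let na = nel i (msi a i); nb = nel i (msi b i) in
     add_mset {#na, nb#} (image_mset (\<lambda>a'. {#a', nb#}) (msi a i - {#na#}) +
                          image_mset (\<lambda>b'. {#na, b'#}) (msi b i - {#nb#})))"

lemma Kf_sym: "Kf i a b = Kf i b a"
  unfolding Kf_def Let_def by (simp add: add_mset_commute union_commute)

lemma pair_mset_eq: "{#a, b#} = {#a', b'#} \<Longrightarrow> (a = a' \<and> b = b') \<or> (a = b' \<and> b = a')"
  by (metis add_mset_eq_single add_mset_remove_trivial diff_union_swap insert_noteq_member)

locale dU =
  fixes G :: "('a + 'b, 'l, 'c) cgraph" and SL SR :: "('a + 'b) set"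
  assumes finL: "finite SL" and finR: "finite SR"
    and SLi: "SL \<subseteq> range Inl" and SRi: "SR \<subseteq> range Inr"
    and noedge1: "\<And>a b. edge G (Inl a) (Inr b) = None"
    and noedge2: "\<And>a b. edge G (Inr b) (Inl a) = None"
begin

lemma disjLR: "SL \<inter> SR = {}" using SLi SRi by auto

lemma key_step:
  assumes i: "i < length zs"
  shows "image_mset (\<lambda>u. key G SL SR n (zs[i := u])) (mset_set (insert None (Some ` (SL \<union> SR))))
       = Kf i (col G SL (Suc n) (piL zs)) (col G SR (Suc n) (piR zs))"
proof -
  have M: "mset_set (insert None (Some ` (SL \<union> SR))) =
     add_mset None (image_mset Some (mset_set SL) + image_mset Some (mset_set SR))"
    unfolding mset_set_opt[OF finite_UnI[OF finL finR]] mset_set_Union[OF finL finR disjLR] by simp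
  have L: "key G SL SR n (zs[i := Some x]) = {#col G SL n ((piL zs)[i := Some x]), col G SR n ((piR zs)[i := None])#}"
    if "x \<in> SL" for x
    using that SLi by (auto simp: key_def piL_upd piR_upd pl1_def pr1_def)
  have R: "key G SL SR n (zs[i := Some x]) = {#col G SL n ((piL zs)[i := None]), col G SR n ((piR zs)[i := Some x])#}"
    if "x \<in> SR" for x
    using that SRi by (auto simp: key_def piL_upd piR_upd pl1_def pr1_def)
  have N: "key G SL SR n (zs[i := None]) = {#col G SL n ((piL zs)[i := None]), col G SR n ((piR zs)[i := None])#}"
    by (simp add: key_def piL_upd piR_upd pl1_def pr1_def)
  have iL: "i < length (piL zs)" and iR: "i < length (piR zs)" using i by auto
  have "image_mset (\<lambda>x. key G SL SR n (zs[i := Some x])) (mset_set SL) =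
        image_mset (\<lambda>a'. {#a', col G SR n ((piR zs)[i := None])#}) (image_mset (\<lambda>x. col G SL n ((piL zs)[i := Some x])) (mset_set SL))"
    unfolding multiset.map_comp o_def using finL by (intro image_mset_cong) (simp add: L)
  moreover have "image_mset (\<lambda>x. key G SL SR n (zs[i := Some x])) (mset_set SR) =
        image_mset (\<lambda>b'. {#col G SL n ((piL zs)[i := None]), b'#}) (image_mset (\<lambda>x. col G SR n ((piR zs)[i := Some x])) (mset_set SR))"
    unfolding multiset.map_comp o_def using finR by (intro image_mset_cong) (simp add: R)
  ultimately show ?thesis
    unfolding M Kf_def Let_def nel_col(1)[OF finL iL] nel_col(1)[OF finR iR]
      msi_minus[OF finL iL] msi_minus[OF finR iR]
    by (simp add: N multiset.map_comp o_def)
qed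

definition mrg :: "('l,'c) oatp \<Rightarrow> ('l,'c) oatp \<Rightarrow> ('l,'c) oatp" where
  "mrg a b = (\<lambda>p. if fst a p \<noteq> None then fst a p else fst b p,
     \<lambda>p q. if fst a p \<noteq> None \<and> fst a q \<noteq> None then snd a p q
           else if fst b p \<noteq> None \<and> fst b q \<noteq> None then snd b p q
           else (fst a p = None \<and> fst b p = None \<and> fst a q = None \<and> fst b q = None, None))"

lemma mrg_sym: "(\<And>p. fst a p = None \<or> fst b p = None) \<Longrightarrow> mrg a b = mrg b a"
  unfolding mrg_def by (auto simp: fun_eq_iff) (metis option.distinct(1))+

lemma zo_piL: "zo (piL zs) p = pl1 (zo zs p)" by (simp add: zo_def piL_def pl1_def)
lemma zo_piR: "zo (piR zs) p = pr1 (zo zs p)" by (simp add: zo_def piR_def pr1_def)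

lemma atpo_decomp: "atpo G zs = mrg (atpo G (piL zs)) (atpo G (piR zs))"
proof (rule prod_eqI)
  show "fst (atpo G zs) = fst (mrg (atpo G (piL zs)) (atpo G (piR zs)))"
  proof (rule ext)
    fix p show "fst (atpo G zs) p = fst (mrg (atpo G (piL zs)) (atpo G (piR zs))) p"
      unfolding mrg_def atpo_def zo_piL zo_piR
      by (cases "zo zs p") (auto simp: pl1_def pr1_def split: sum.splits)
  qed
  show "snd (atpo G zs) = snd (mrg (atpo G (piL zs)) (atpo G (piR zs)))"
  proof (rule ext, rule ext)
    fix p q show "snd (atpo G zs) p q = snd (mrg (atpo G (piL zs)) (atpo G (piR zs))) p q"
      unfolding mrg_def atpo_def zo_piL zo_piR
      by (cases "zo zs p"; cases "zo zs q")
         (auto simp: pl1_def pr1_def edgeo_def noedge1 noedge2 split: sum.splits)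
  qed
qed

lemma atpo_disj: "fst (atpo G (piL zs)) p = None \<or> fst (atpo G (piR zs)) p = None"
  by (cases "zo zs p") (auto simp: atpo_def zo_piL zo_piR pl1_def pr1_def split: sum.splits)

lemma decomp:
  "length zs = length zs' \<Longrightarrow> key G SL SR n zs = key G SL SR n zs' \<Longrightarrow>
   col G (SL \<union> SR) n zs = col G (SL \<union> SR) n zs'"
proof (induction n arbitrary: zs zs')
  case 0
  let ?x = "atpo G (piL zs)" and ?y = "atpo G (piR zs)" and ?x' = "atpo G (piL zs')" and ?y' = "atpo G (piR zs')"
  have "{#PBase ?x, PBase ?y#} = {#PBase ?x', PBase ?y'#}" using 0 by (simp add: key_def)
  then have "(?x = ?x' \<and> ?y = ?y') \<or> (?x = ?y' \<and> ?y = ?x')" by (auto dest: pair_mset_eq)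
  then show ?case
  proof
    assume "?x = ?x' \<and> ?y = ?y'" then show ?thesis by (simp add: atpo_decomp[of zs] atpo_decomp[of zs'])
  next
    assume a: "?x = ?y' \<and> ?y = ?x'"
    have "atpo G zs' = mrg ?y ?x" using a by (simp add: atpo_decomp[of zs'])
    also have "\<dots> = mrg ?x ?y" by (rule mrg_sym) (metis atpo_disj)
    finally show ?thesis by (simp add: atpo_decomp[of zs])
  qed
next
  case (Suc n)
  have keyn: "key G SL SR n zs = key G SL SR n zs'"
  proof -
    have "key G SL SR n zs = image_mset prev (key G SL SR (Suc n) zs)"
      by (simp only: key_def prev_col image_mset_add_mset image_mset_empty)
    also have "\<dots> = image_mset prev (key G SL SR (Suc n) zs')" using Suc.prems by simp
    also have "\<dots> = key G SL SR n zs'"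
      by (simp only: key_def prev_col image_mset_add_mset image_mset_empty)
    finally show ?thesis .
  qed
  have comp: "image_mset (\<lambda>u. col G (SL \<union> SR) n (zs[i := u])) (mset_set (insert None (Some ` (SL \<union> SR)))) =
              image_mset (\<lambda>u. col G (SL \<union> SR) n (zs'[i := u])) (mset_set (insert None (Some ` (SL \<union> SR))))"
    if i: "i < length zs" for i
  proof -
    let ?M = "mset_set (insert None (Some ` (SL \<union> SR)))"
    have i': "i < length zs'" using i Suc.prems by simp
    have kk: "Kf i (col G SL (Suc n) (piL zs)) (col G SR (Suc n) (piR zs)) =
              Kf i (col G SL (Suc n) (piL zs')) (col G SR (Suc n) (piR zs'))"
    proof -
      have "{#col G SL (Suc n) (piL zs), col G SR (Suc n) (piR zs)#} =
            {#col G SL (Suc n) (piL zs'), col G SR (Suc n) (piR zs')#}"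
        using Suc.prems by (simp add: key_def)
      then show ?thesis by (auto dest!: pair_mset_eq intro: Kf_sym)
    qed
    have eqk: "image_mset (key G SL SR n) (image_mset (\<lambda>u. zs[i := u]) ?M) =
               image_mset (key G SL SR n) (image_mset (\<lambda>u. zs'[i := u]) ?M)"
      unfolding multiset.map_comp o_def key_step[OF i] key_step[OF i'] kk ..
    have "image_mset (col G (SL \<union> SR) n) (image_mset (\<lambda>u. zs[i := u]) ?M) =
          image_mset (col G (SL \<union> SR) n) (image_mset (\<lambda>u. zs'[i := u]) ?M)"
      by (rule GL2[OF _ _ _ eqk]) (auto intro!: Suc.IH simp: Suc.prems)
    then show ?thesis by (simp add: multiset.map_comp o_def)
  qed
  show ?case
    unfolding col.simps
  proof (rule arg_cong2[where f=PStep])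
    show "col G (SL \<union> SR) n zs = col G (SL \<union> SR) n zs'" using Suc.IH Suc.prems keyn by blast
    show "map (\<lambda>i. image_mset (\<lambda>u. col G (SL \<union> SR) n (zs[i := u])) (mset_set (insert None (Some ` (SL \<union> SR))))) [0..<length zs] =
          map (\<lambda>i. image_mset (\<lambda>u. col G (SL \<union> SR) n (zs'[i := u])) (mset_set (insert None (Some ` (SL \<union> SR))))) [0..<length zs']"
      using Suc.prems(1) comp by (intro map_cong) auto
  qed
qed

end

locale two =
  fixes Gf :: "('a,'l,'c) cgraph" and Gg :: "('b,'l,'c) cgraph" and k :: nat
  assumes finf: "finite (verts Gf)" and fing: "finite (verts Gg)" and kpos: "0 < k"
begin

definition "U = disj_union Gf Gg"
definition "SL = Inl ` verts Gf"
definition "SR = Inr ` verts Gg"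

lemma verts_U: "verts U = SL \<union> SR" using finf fing by (simp add: U_def SL_def SR_def disj_union_def)
lemma edge_U1: "edge U (Inl a) (Inr b) = None" by (simp add: U_def disj_union_def)
lemma edge_U2: "edge U (Inr b) (Inl a) = None" by (simp add: U_def disj_union_def)
lemma finSL: "finite SL" using finf by (simp add: SL_def)
lemma finSR: "finite SR" using fing by (simp add: SR_def)
lemma finV: "finite (verts U)" using finSL finSR by (simp add: verts_U)

sublocale dU U SL SR
  by unfold_locales (auto simp: finf fing SL_def SR_def edge_U1 edge_U2)

definition Ss :: "bool \<Rightarrow> ('a + 'b) set" where "Ss s = (if s then SL else SR)"

lemma finSs: "finite (Ss s)" by (simp add: Ss_def finSL finSR)

lemma V_split: "mset_set (verts U) = mset_set (Ss s) + mset_set (Ss (\<not> s))"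
  using mset_set_Union[OF finSL finSR disjLR] by (cases s) (auto simp: Ss_def verts_U union_commute)

definition pure :: "bool \<Rightarrow> ('a + 'b) option list \<Rightarrow> bool" where
  "pure s ws = (length ws = k \<and> set ws \<subseteq> insert None (Some ` Ss s))"

lemma pure_upd: "pure s ws \<Longrightarrow> u \<in> insert None (Some ` Ss s) \<Longrightarrow> pure s (ws[i := u])"
  unfolding pure_def by (meson dual_order.trans insert_subset length_list_update set_update_subset_insert)

lemma pureT: "pure True ws \<Longrightarrow> \<forall>x\<in>set ws. x = None \<or> (\<exists>a. x = Some (Inl a))"
  unfolding pure_def Ss_def SL_def by auto
lemma pureF: "pure False ws \<Longrightarrow> \<forall>x\<in>set ws. x = None \<or> (\<exists>a. x = Some (Inr a))"
  unfolding pure_def Ss_def SR_def by auto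

lemma pure_piL: "pure True ws \<Longrightarrow> piL ws = ws"
  unfolding piL_def by (rule map_idI) (use pureT in \<open>fastforce simp: pl1_def\<close>)
lemma pure_piR: assumes a: "pure True ws" shows "piR ws = replicate k None"
proof -
  have "\<forall>x\<in>set ws. pr1 x = None" using pureT[OF a] by (auto simp: pr1_def)
  then show ?thesis using a unfolding piR_def pure_def by (auto intro!: replicate_eqI)
qed
lemma pure_piR': "pure False ws \<Longrightarrow> piR ws = ws"
  unfolding piR_def by (rule map_idI) (use pureF in \<open>fastforce simp: pr1_def\<close>)
lemma pure_piL': assumes a: "pure False ws" shows "piL ws = replicate k None"
proof -
  have "\<forall>x\<in>set ws. pl1 x = None" using pureF[OF a] by (auto simp: pl1_def)
  then show ?thesis using a unfolding piL_def pure_def by (auto intro!: replicate_eqI)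
qed

lemma pure_key: "pure s ws \<Longrightarrow>
  key U SL SR n ws = {#col U (Ss s) n ws, col U (Ss (\<not> s)) n (replicate k None)#}"
  by (cases s) (auto simp: key_def pure_piL pure_piR pure_piL' pure_piR' Ss_def add_mset_commute)

lemma pure_key_mixed:
  assumes "pure s ws" "i < k" "x \<in> Ss (\<not> s)"
  shows "key U SL SR n (ws[i := Some x]) =
    {#col U (Ss s) n (ws[i := None]), col U (Ss (\<not> s)) n ((replicate k None)[i := Some x])#}"
proof (cases s)
  case True
  then have "x \<in> SR" using assms by (simp add: Ss_def)
  then obtain b where "x = Inr b" by (auto simp: SR_def)
  then show ?thesis using True assms
    by (simp add: key_def piL_upd piR_upd pure_piL pure_piR pl1_def pr1_def Ss_def)
next
  case False
  then have "x \<in> SL" using assms by (simp add: Ss_def)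
  then obtain a where "x = Inl a" by (auto simp: SL_def)
  then show ?thesis using False assms
    by (simp add: key_def piL_upd piR_upd pure_piL' pure_piR' pl1_def pr1_def Ss_def add_mset_commute)
qed

definition Qn :: "nat \<Rightarrow> bool" where
  "Qn n = (\<forall>s s' ws ws'. pure s ws \<longrightarrow> pure s' ws' \<longrightarrow> col U (verts U) n ws = col U (verts U) n ws'
                \<longrightarrow> col U (Ss s) n ws = col U (Ss s') n ws')"

definition Tm :: "nat \<Rightarrow> bool \<Rightarrow> nat \<Rightarrow> ('l,'c) pcol multiset" where
  "Tm n s i = image_mset (\<lambda>x. col U (Ss s) n ((replicate k None)[i := Some x])) (mset_set (Ss s))"

definition Tn :: "nat \<Rightarrow> bool" where
  "Tn n = (\<forall>i<k. Tm n True i = Tm n False i)"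

lemma Tn_any: assumes "Tn n" "i < k" shows "Tm n s i = Tm n s' i"
proof -
  have e: "Tm n True i = Tm n False i" using assms unfolding Tn_def by blast
  show ?thesis by (cases s; cases s') (simp_all only: e)
qed

lemma Q0aux: "col U (verts U) 0 ws = col U (verts U) 0 ws' \<Longrightarrow> col U (Ss s) 0 ws = col U (Ss s') 0 ws'"
  by (simp only: col.simps(1))
lemma Q0: "Qn 0" unfolding Qn_def using Q0aux by blast

lemma decompV: "length zs = length zs' \<Longrightarrow> key U SL SR n zs = key U SL SR n zs' \<Longrightarrow>
   col U (verts U) n zs = col U (verts U) n zs'"
  unfolding verts_U by (rule decomp)

lemma Q_step:
  assumes Q: "Qn n" and T: "Tn n"
  shows "Qn (Suc n)"
  unfolding Qn_def
proof (intro allI impI)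
  fix s s' ws ws'
  assume p: "pure s ws" and p': "pure s' ws'"
    and eq: "col U (verts U) (Suc n) ws = col U (verts U) (Suc n) ws'"
  have lw: "length ws = k" and lw': "length ws' = k" using p p' by (auto simp: pure_def)
  have eqn: "col U (verts U) n ws = col U (verts U) n ws'"
    using arg_cong[OF eq, of prev] by simp
  have comp: "image_mset (\<lambda>u. col U (Ss s) n (ws[i := u])) (mset_set (insert None (Some ` Ss s))) =
              image_mset (\<lambda>u. col U (Ss s') n (ws'[i := u])) (mset_set (insert None (Some ` Ss s')))"
    if i: "i < k" for i
  proof -
    have iw: "i < length ws" and iw': "i < length ws'" using i lw lw' by auto
    have ms: "msi (col U (verts U) (Suc n) ws) i = msi (col U (verts U) (Suc n) ws') i" using eq by simp
    have nn: "col U (verts U) n (ws[i := None]) = col U (verts U) n (ws'[i := None])"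
      using ms nel_col(1)[OF finV iw, of U n] nel_col(1)[OF finV iw', of U n] by simp
    have c: "col U (Ss s) n (ws[i := None]) = col U (Ss s') n (ws'[i := None])"
      using Q nn pure_upd[OF p, of None] pure_upd[OF p', of None] unfolding Qn_def by blast
    have im: "image_mset (\<lambda>x. col U (verts U) n (ws[i := Some x])) (mset_set (verts U)) =
              image_mset (\<lambda>x. col U (verts U) n (ws'[i := Some x])) (mset_set (verts U))"
      using ms msi_minus[OF finV iw, of U n] msi_minus[OF finV iw', of U n] nn by simp
    let ?A = "image_mset (\<lambda>x. ws[i := Some x]) (mset_set (Ss (\<not> s)))"
    let ?B = "image_mset (\<lambda>x. ws'[i := Some x]) (mset_set (Ss (\<not> s')))"
    have keyA: "image_mset (key U SL SR n) ?A =
        image_mset (\<lambda>t. {#col U (Ss s) n (ws[i := None]), t#}) (Tm n (\<not> s) i)"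
      unfolding Tm_def multiset.map_comp o_def
      by (rule image_mset_cong) (use pure_key_mixed[OF p i] finSs in auto)
    have keyB: "image_mset (key U SL SR n) ?B =
        image_mset (\<lambda>t. {#col U (Ss s') n (ws'[i := None]), t#}) (Tm n (\<not> s') i)"
      unfolding Tm_def multiset.map_comp o_def
      by (rule image_mset_cong) (use pure_key_mixed[OF p' i] finSs in auto)
    have lenA: "\<And>x. x \<in># ?A \<Longrightarrow> length x = k" using lw by auto
    have lenB: "\<And>x. x \<in># ?B \<Longrightarrow> length x = k" using lw' by auto
    have mixed: "image_mset (col U (verts U) n) ?A = image_mset (col U (verts U) n) ?B"
    proof (rule GL2[where k = "key U SL SR n"])
      show "image_mset (key U SL SR n) ?A = image_mset (key U SL SR n) ?B"
        unfolding keyA keyB c Tn_any[OF T i, of "\<not> s" "\<not> s'"] ..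
    qed (auto intro!: decompV simp: lw lw')
    have pureparts: "image_mset (\<lambda>x. col U (verts U) n (ws[i := Some x])) (mset_set (Ss s)) =
                     image_mset (\<lambda>x. col U (verts U) n (ws'[i := Some x])) (mset_set (Ss s'))"
    proof -
      have e1: "image_mset (\<lambda>x. col U (verts U) n (ws[i := Some x])) (mset_set (verts U)) =
        image_mset (\<lambda>x. col U (verts U) n (ws[i := Some x])) (mset_set (Ss s)) +
        image_mset (\<lambda>x. col U (verts U) n (ws[i := Some x])) (mset_set (Ss (\<not> s)))"
        by (subst V_split[of s]) (rule image_mset_union)
      have e2: "image_mset (\<lambda>x. col U (verts U) n (ws'[i := Some x])) (mset_set (verts U)) =
        image_mset (\<lambda>x. col U (verts U) n (ws'[i := Some x])) (mset_set (Ss s')) +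
        image_mset (\<lambda>x. col U (verts U) n (ws'[i := Some x])) (mset_set (Ss (\<not> s')))"
        by (subst V_split[of s']) (rule image_mset_union)
      have m: "image_mset (\<lambda>x. col U (verts U) n (ws[i := Some x])) (mset_set (Ss (\<not> s))) =
          image_mset (\<lambda>x. col U (verts U) n (ws'[i := Some x])) (mset_set (Ss (\<not> s')))"
        using mixed by (simp add: multiset.map_comp o_def)
      show ?thesis using im unfolding e1 e2 m by simp
    qed
    let ?A' = "image_mset (\<lambda>x. ws[i := Some x]) (mset_set (Ss s))"
    let ?B' = "image_mset (\<lambda>x. ws'[i := Some x]) (mset_set (Ss s'))"
    have pA: "\<And>x. x \<in># ?A' \<Longrightarrow> pure s x" using p finSs by (auto intro!: pure_upd)
    have pB: "\<And>x. x \<in># ?B' \<Longrightarrow> pure s' x" using p' finSs by (auto intro!: pure_upd)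
    have "image_mset (col U (Ss s) n) ?A' = image_mset (col U (Ss s') n) ?B'"
    proof (rule GL2[where k = "col U (verts U) n"])
      show "image_mset (col U (verts U) n) ?A' = image_mset (col U (verts U) n) ?B'"
        using pureparts by (simp add: multiset.map_comp o_def)
      show "\<And>x y. x \<in># ?A' \<Longrightarrow> y \<in># ?B' \<Longrightarrow> col U (verts U) n x = col U (verts U) n y \<Longrightarrow>
          col U (Ss s) n x = col U (Ss s') n y"
        using Q pA pB unfolding Qn_def by blast
      show "\<And>x y. x \<in># ?A' \<Longrightarrow> y \<in># ?A' \<Longrightarrow> col U (verts U) n x = col U (verts U) n y \<Longrightarrow>
          col U (Ss s) n x = col U (Ss s) n y"
        using Q pA unfolding Qn_def by blast
      show "\<And>x y. x \<in># ?B' \<Longrightarrow> y \<in># ?B' \<Longrightarrow> col U (verts U) n x = col U (verts U) n y \<Longrightarrow>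
          col U (Ss s') n x = col U (Ss s') n y"
        using Q pB unfolding Qn_def by blast
    qed
    then have "image_mset (\<lambda>x. col U (Ss s) n (ws[i := Some x])) (mset_set (Ss s)) =
               image_mset (\<lambda>x. col U (Ss s') n (ws'[i := Some x])) (mset_set (Ss s'))"
      by (simp add: multiset.map_comp o_def)
    then show ?thesis
      unfolding mset_set_opt[OF finSs] image_mset_add_mset multiset.map_comp o_def c by simp
  qed
  show "col U (Ss s) (Suc n) ws = col U (Ss s') (Suc n) ws'"
    unfolding col.simps lw lw'
  proof (rule arg_cong2[where f=PStep])
    show "col U (Ss s) n ws = col U (Ss s') n ws'" using Q p p' eqn unfolding Qn_def by blast
    show "map (\<lambda>i. image_mset (\<lambda>u. col U (Ss s) n (ws[i := u])) (mset_set (insert None (Some ` Ss s)))) [0..<k] =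
          map (\<lambda>i. image_mset (\<lambda>u. col U (Ss s') n (ws'[i := u])) (mset_set (insert None (Some ` Ss s')))) [0..<k]"
      using comp by (intro map_cong) auto
  qed
qed

end

lemma finite_ktuples: "finite A \<Longrightarrow> finite (ktuples k A)"
  unfolding ktuples_def using finite_lists_length_eq[of A k] by (simp add: conj_commute)

definition isd :: "nat \<Rightarrow> ('l,'c) pcol \<Rightarrow> bool" where
  "isd k c = (\<forall>j<k. fst (snd (base c) 0 j))"

lemma mk_rep: "i < k \<Longrightarrow> maskl (- {i}) (map Some (map f (replicate k x))) = (replicate k None)[i := Some (f x)]"
  by (auto simp: maskl_def nth_list_update intro!: nth_equalityI)
lemma Dc_rep: "i < k \<Longrightarrow> Dc (- {i}) n (col G S n (map Some (map f (replicate k x)))) = col G S n ((replicate k None)[i := Some (f x)])"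
  by (simp only: mk_rep[symmetric] col_maskl)

context two
begin

lemma diag_lemma:
  assumes A: "finite A" and f: "inj f" and i: "i < k"
  shows "image_mset (\<lambda>x. col U (f ` A) n ((replicate k None)[i := Some x])) (mset_set (f ` A)) =
         image_mset (Dc (- {i}) n) (filter_mset (isd k)
           (image_mset (\<lambda>vs. col U (f ` A) n (map Some (map f vs))) (mset_set (ktuples k A))))"
proof -
  let ?F = "\<lambda>vs. col U (f ` A) n (map Some (map f vs))"
  have set_eq: "{vs \<in> ktuples k A. isd k (?F vs)} = (\<lambda>x. replicate k x) ` A"
  proof (intro set_eqI iffI)
    fix vs assume vs: "vs \<in> {vs \<in> ktuples k A. isd k (?F vs)}"
    then have len: "length vs = k" and sub: "set vs \<subseteq> A" by (auto simp: ktuples_def)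
    have eqj: "vs ! 0 = vs ! j" if "j < k" for j
    proof -
      have "fst (snd (atpo U (map Some (map f vs))) 0 j)" using vs that by (auto simp: isd_def)
      then show ?thesis using that len kpos f by (auto simp: atpo_def zo_def inj_eq)
    qed
    have "vs = replicate k (vs ! 0)" using len eqj by (auto intro!: nth_equalityI)
    moreover have "vs ! 0 \<in> A" using sub len kpos by auto
    ultimately show "vs \<in> (\<lambda>x. replicate k x) ` A" by blast
  next
    fix vs assume "vs \<in> (\<lambda>x. replicate k x) ` A"
    then obtain x where "x \<in> A" "vs = replicate k x" by blast
    then show "vs \<in> {vs \<in> ktuples k A. isd k (?F vs)}"
      using kpos by (auto simp: ktuples_def isd_def atpo_def zo_def)
  qed
  have injr: "inj_on (\<lambda>x. replicate k x) A" using kpos by (auto simp: inj_on_def)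
  have "filter_mset (isd k) (image_mset ?F (mset_set (ktuples k A))) =
        image_mset ?F (mset_set {vs \<in> ktuples k A. isd k (?F vs)})"
    by (simp add: filter_mset_image_mset finite_ktuples[OF A])
  also have "\<dots> = image_mset ?F (image_mset (\<lambda>x. replicate k x) (mset_set A))"
    unfolding set_eq image_mset_mset_set[OF injr] ..
  finally have 1: "filter_mset (isd k) (image_mset ?F (mset_set (ktuples k A))) =
     image_mset (\<lambda>x. ?F (replicate k x)) (mset_set A)" by (simp only: multiset.map_comp comp_def)
  have 2: "Dc (- {i}) n (?F (replicate k x)) = col U (f ` A) n ((replicate k None)[i := Some (f x)])" for x
    by (rule Dc_rep[OF i])
  have "image_mset (\<lambda>x. col U (f ` A) n ((replicate k None)[i := Some x])) (mset_set (f ` A)) =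
        image_mset (\<lambda>x. col U (f ` A) n ((replicate k None)[i := Some (f x)])) (mset_set A)"
  proof -
    have "mset_set (f ` A) = image_mset f (mset_set A)"
      by (metis f image_mset_mset_set inj_on_subset subset_UNIV)
    then show ?thesis by (simp only: multiset.map_comp comp_def)
  qed
  also have "\<dots> = image_mset (Dc (- {i}) n) (image_mset (\<lambda>x. ?F (replicate k x)) (mset_set A))"
    by (simp only: multiset.map_comp comp_def 2)
  finally show ?thesis unfolding 1 .
qed

definition HX :: "nat \<Rightarrow> bool" where
  "HX n = (image_mset (\<lambda>vs. col U (verts U) n (map Some (map Inl vs))) (mset_set (ktuples k (verts Gf))) =
           image_mset (\<lambda>vs. col U (verts U) n (map Some (map Inr vs))) (mset_set (ktuples k (verts Gg))))"

lemma pure_Inl: "vs \<in> ktuples k (verts Gf) \<Longrightarrow> pure True (map Some (map Inl vs))"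
  by (auto simp: ktuples_def pure_def Ss_def SL_def)
lemma pure_Inr: "vs \<in> ktuples k (verts Gg) \<Longrightarrow> pure False (map Some (map Inr vs))"
  by (auto simp: ktuples_def pure_def Ss_def SR_def)

lemma T_from_Q:
  assumes H: "HX n" and Q: "Qn n"
  shows "Tn n"
  unfolding Tn_def
proof (intro allI impI)
  fix i assume i: "i < k"
  let ?FL = "\<lambda>vs. col U SL n (map Some (map Inl vs))"
  let ?FR = "\<lambda>vs. col U SR n (map Some (map Inr vs))"
  let ?A = "mset_set (ktuples k (verts Gf))" and ?B = "mset_set (ktuples k (verts Gg))"
  have memA: "x \<in># ?A \<Longrightarrow> x \<in> ktuples k (verts Gf)" for x using finite_ktuples[OF finf] by simp
  have memB: "x \<in># ?B \<Longrightarrow> x \<in> ktuples k (verts Gg)" for x using finite_ktuples[OF fing] by simp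
  let ?A' = "image_mset (\<lambda>vs. map Some (map Inl vs)) ?A"
  let ?B' = "image_mset (\<lambda>vs. map Some (map Inr vs)) ?B"
  have pA: "x \<in># ?A' \<Longrightarrow> pure True x" for x using memA pure_Inl by auto
  have pB: "x \<in># ?B' \<Longrightarrow> pure False x" for x using memB pure_Inr by auto
  have "image_mset (col U (Ss True) n) ?A' = image_mset (col U (Ss False) n) ?B'"
  proof (rule GL2[where k = "col U (verts U) n"])
    show "image_mset (col U (verts U) n) ?A' = image_mset (col U (verts U) n) ?B'"
      using H unfolding HX_def by (simp add: multiset.map_comp o_def)
    show "\<And>x y. x \<in># ?A' \<Longrightarrow> y \<in># ?B' \<Longrightarrow> col U (verts U) n x = col U (verts U) n y \<Longrightarrow>
          col U (Ss True) n x = col U (Ss False) n y"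
      using Q pA pB unfolding Qn_def by blast
    show "\<And>x y. x \<in># ?A' \<Longrightarrow> y \<in># ?A' \<Longrightarrow> col U (verts U) n x = col U (verts U) n y \<Longrightarrow>
          col U (Ss True) n x = col U (Ss True) n y"
      using Q pA unfolding Qn_def by blast
    show "\<And>x y. x \<in># ?B' \<Longrightarrow> y \<in># ?B' \<Longrightarrow> col U (verts U) n x = col U (verts U) n y \<Longrightarrow>
          col U (Ss False) n x = col U (Ss False) n y"
      using Q pB unfolding Qn_def by blast
  qed
  then have step1: "image_mset ?FL ?A = image_mset ?FR ?B"
    by (simp add: multiset.map_comp o_def Ss_def)
  have "Tm n True i = image_mset (Dc (- {i}) n) (filter_mset (isd k) (image_mset ?FL ?A))"
    unfolding Tm_def Ss_def SL_def using diag_lemma[OF finf _ i, of Inl n] by simp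
  also have "\<dots> = image_mset (Dc (- {i}) n) (filter_mset (isd k) (image_mset ?FR ?B))"
    unfolding step1 ..
  also have "\<dots> = Tm n False i"
    unfolding Tm_def Ss_def SR_def using diag_lemma[OF fing _ i, of Inr n] by simp
  finally show "Tm n True i = Tm n False i" .
qed

lemma Q_all:
  assumes "\<And>n. HX n"
  shows "Qn n"
proof (induction n)
  case 0 then show ?case by (rule Q0)
next
  case (Suc n) then show ?case using Q_step T_from_Q assms by blast
qed

end

lemma count_image_mset_set:
  "finite A \<Longrightarrow> count (image_mset f (mset_set A)) c = card {x \<in> A. f x = c}"
proof (induction A rule: finite_induct)
  case empty then show ?case by simp
next
  case (insert a A)
  have "{x \<in> insert a A. f x = c} = (if f a = c then insert a {x \<in> A. f x = c} else {x \<in> A. f x = c})"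
    by auto
  then show ?case using insert by auto
qed

section \<open>Stability of k-WL\<close>

lemma kwl_part_mono: "kwl_part k G (Suc n) \<subseteq> kwl_part k G n"
  unfolding kwl_part_def by auto

lemma kwl_part_fin: "finite (verts G) \<Longrightarrow> finite (kwl_part k G n)"
proof -
  assume "finite (verts G)"
  then have "finite (ktuples k (verts G) \<times> ktuples k (verts G))" by (simp add: finite_ktuples)
  moreover have "kwl_part k G n \<subseteq> ktuples k (verts G) \<times> ktuples k (verts G)"
    unfolding kwl_part_def by auto
  ultimately show ?thesis by (meson finite_subset)
qed

lemma kwl_upd_kt: "zs \<in> ktuples k V \<Longrightarrow> u \<in> V \<Longrightarrow> zs[i := u] \<in> ktuples k V"
  unfolding ktuples_def using set_update_subset_insert[of zs i u] by auto

lemma mem_img: "finite V \<Longrightarrow> x \<in># image_mset f (mset_set V) \<Longrightarrow> \<exists>u\<in>V. x = f u"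
  by auto

lemma kwl_prop:
  assumes fin: "finite (verts G)" and eq: "kwl_part k G (Suc n) = kwl_part k G n"
  shows "kwl_part k G (Suc (Suc n)) = kwl_part k G (Suc n)"
proof
  show "kwl_part k G (Suc (Suc n)) \<subseteq> kwl_part k G (Suc n)" by (rule kwl_part_mono)
  show "kwl_part k G (Suc n) \<subseteq> kwl_part k G (Suc (Suc n))"
  proof
    fix p assume p: "p \<in> kwl_part k G (Suc n)"
    obtain a b where ab: "p = (a, b)" by (cases p)
    have a: "a \<in> ktuples k (verts G)" and b: "b \<in> ktuples k (verts G)"
      and e: "kwl_col k G (Suc n) a = kwl_col k G (Suc n) b" using p ab by (auto simp: kwl_part_def)
    have cons: "kwl_col k G (Suc n) x = kwl_col k G (Suc n) y"
      if "x \<in> ktuples k (verts G)" "y \<in> ktuples k (verts G)" "kwl_col k G n x = kwl_col k G n y" for x y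
      using that eq unfolding kwl_part_def by blast
    have ms: "image_mset (\<lambda>u. kwl_col k G (Suc n) (a[i := u])) (mset_set (verts G)) =
              image_mset (\<lambda>u. kwl_col k G (Suc n) (b[i := u])) (mset_set (verts G))" if i: "i < k" for i
    proof -
      have "image_mset (\<lambda>u. kwl_col k G n (a[i := u])) (mset_set (verts G)) =
            image_mset (\<lambda>u. kwl_col k G n (b[i := u])) (mset_set (verts G))"
      proof -
        have L: "map (\<lambda>i. image_mset (\<lambda>u. kwl_col k G n (a[i := u])) (mset_set (verts G))) [0..<k] =
                 map (\<lambda>i. image_mset (\<lambda>u. kwl_col k G n (b[i := u])) (mset_set (verts G))) [0..<k]"
          using e by (simp only: kwl_col.simps kcol.inject)
        have "map (\<lambda>i. image_mset (\<lambda>u. kwl_col k G n (a[i := u])) (mset_set (verts G))) [0..<k] ! i =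
              map (\<lambda>i. image_mset (\<lambda>u. kwl_col k G n (b[i := u])) (mset_set (verts G))) [0..<k] ! i"
          using L by (rule arg_cong)
        then show ?thesis using i by (simp add: nth_map_upt)
      qed
      then have e0: "image_mset (kwl_col k G n) (image_mset (\<lambda>u. a[i := u]) (mset_set (verts G))) =
            image_mset (kwl_col k G n) (image_mset (\<lambda>u. b[i := u]) (mset_set (verts G)))"
        by (simp only: multiset.map_comp comp_def)
      have ka: "x \<in># image_mset (\<lambda>u. a[i := u]) (mset_set (verts G)) \<Longrightarrow> x \<in> ktuples k (verts G)" for x
        using mem_img[OF fin, of x "\<lambda>u. a[i := u]"] kwl_upd_kt[OF a] by blast
      have kb: "x \<in># image_mset (\<lambda>u. b[i := u]) (mset_set (verts G)) \<Longrightarrow> x \<in> ktuples k (verts G)" for x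
        using mem_img[OF fin, of x "\<lambda>u. b[i := u]"] kwl_upd_kt[OF b] by blast
      have "image_mset (kwl_col k G (Suc n)) (image_mset (\<lambda>u. a[i := u]) (mset_set (verts G))) =
            image_mset (kwl_col k G (Suc n)) (image_mset (\<lambda>u. b[i := u]) (mset_set (verts G)))"
        by (rule GL2[where k = "kwl_col k G n", OF _ _ _ e0]) (use cons ka kb in blast)+
      then show ?thesis by (simp only: multiset.map_comp comp_def)
    qed
    have "kwl_col k G (Suc (Suc n)) a = kwl_col k G (Suc (Suc n)) b"
      unfolding kwl_col.simps(2)[of k G "Suc n"]
      using e ms by (auto intro!: map_cong)
    then show "p \<in> kwl_part k G (Suc (Suc n))" using a b ab by (simp add: kwl_part_def)
  qed
qed

lemma kwl_exists_stable:
  assumes fin: "finite (verts G)"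
  shows "\<exists>n. kwl_part k G (Suc n) = kwl_part k G n"
proof (rule ccontr)
  assume "\<not> ?thesis"
  then have ne: "kwl_part k G (Suc n) \<noteq> kwl_part k G n" for n by blast
  have "card (kwl_part k G n) + n \<le> card (kwl_part k G 0)" for n
  proof (induction n)
    case 0 then show ?case by simp
  next
    case (Suc n)
    have "kwl_part k G (Suc n) \<subset> kwl_part k G n" using kwl_part_mono ne by blast
    then have "card (kwl_part k G (Suc n)) < card (kwl_part k G n)"
      using kwl_part_fin[OF fin] by (simp add: psubset_card_mono)
    then show ?case using Suc by simp
  qed
  from this[of "Suc (card (kwl_part k G 0))"] show False by simp
qed

lemma kwl_stable:
  assumes fin: "finite (verts G)"
    and zs1: "zs1 \<in> ktuples k (verts G)" and zs2: "zs2 \<in> ktuples k (verts G)"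
    and eq: "kwl_col k G (kwl_stable_round k G) zs1 = kwl_col k G (kwl_stable_round k G) zs2"
  shows "kwl_col k G n zs1 = kwl_col k G n zs2"
proof -
  let ?M = "kwl_stable_round k G"
  have st: "kwl_part k G (Suc ?M) = kwl_part k G ?M"
    unfolding kwl_stable_round_def by (rule LeastI_ex[OF kwl_exists_stable[OF fin]])
  have up2: "kwl_part k G (Suc (?M + d)) = kwl_part k G (?M + d) \<and> kwl_part k G (?M + d) = kwl_part k G ?M" for d
  proof (induction d)
    case 0 then show ?case using st by simp
  next
    case (Suc d)
    have "kwl_part k G (Suc (Suc (?M + d))) = kwl_part k G (Suc (?M + d))"
      using kwl_prop[OF fin] Suc.IH by blast
    then show ?case using Suc.IH by simp
  qed
  have up: "kwl_part k G (?M + d) = kwl_part k G ?M" for d using up2 by blast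
  have down: "kwl_part k G ?M \<subseteq> kwl_part k G n" if "n \<le> ?M" for n
  proof -
    have "kwl_part k G (n + d) \<subseteq> kwl_part k G n" for d
    proof (induction d)
      case 0 then show ?case by simp
    next
      case (Suc d) then show ?case using kwl_part_mono[of k G "n + d"] by simp
    qed
    from this[of "?M - n"] show ?thesis using that by simp
  qed
  have "(zs1, zs2) \<in> kwl_part k G ?M" using zs1 zs2 eq by (simp add: kwl_part_def)
  moreover have "kwl_part k G ?M \<subseteq> kwl_part k G n"
  proof (cases "n \<le> ?M")
    case True then show ?thesis by (rule down)
  next
    case False
    then have "n = ?M + (n - ?M)" by simp
    then show ?thesis using up[of "n - ?M"] by simp
  qed
  ultimately show ?thesis by (auto simp: kwl_part_def)
qed

context two
begin

lemma HX_from_kwl: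
  assumes nd: "\<not> kwl_distinguishes k Gf Gg"
  shows "HX n"
proof -
  let ?M = "kwl_stable_round k U"
  let ?A = "mset_set (ktuples k (verts Gf))" and ?B = "mset_set (ktuples k (verts Gg))"
  have cnt: "card {vs \<in> ktuples k (verts Gf). kwl_col k U ?M (map Inl vs) = c} =
             card {vs \<in> ktuples k (verts Gg). kwl_col k U ?M (map Inr vs) = c}" for c
    using nd unfolding kwl_distinguishes_def Let_def U_def by auto
  have H0: "image_mset (\<lambda>vs. kwl_col k U ?M (map Inl vs)) ?A = image_mset (\<lambda>vs. kwl_col k U ?M (map Inr vs)) ?B"
    by (rule multiset_eqI) (simp add: count_image_mset_set finite_ktuples finf fing cnt)
  let ?A' = "image_mset (map Inl) ?A" and ?B' = "image_mset (map Inr) ?B"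
  have ktA: "x \<in># ?A' \<Longrightarrow> x \<in> ktuples k (verts U)" for x
    using finite_ktuples[OF finf] by (auto simp: ktuples_def verts_U SL_def) blast
  have ktB: "x \<in># ?B' \<Longrightarrow> x \<in> ktuples k (verts U)" for x
    using finite_ktuples[OF fing] by (auto simp: ktuples_def verts_U SR_def) blast
  have colk: "col U (verts U) n (map Some x) = Dk k {} n (kwl_col k U n x)" if "x \<in> ktuples k (verts U)" for x
    using col_kwl[OF finV, of x k n "{}"] that by (auto simp: ktuples_def)
  have cons: "col U (verts U) n (map Some x) = col U (verts U) n (map Some y)"
    if "x \<in> ktuples k (verts U)" "y \<in> ktuples k (verts U)" "kwl_col k U ?M x = kwl_col k U ?M y" for x y
    using that colk kwl_stable[OF finV, of x k y n] by simp
  have "image_mset (\<lambda>x. col U (verts U) n (map Some x)) ?A' = image_mset (\<lambda>x. col U (verts U) n (map Some x)) ?B'"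
  proof (rule GL2[where k = "kwl_col k U ?M"])
    show "image_mset (kwl_col k U ?M) ?A' = image_mset (kwl_col k U ?M) ?B'"
      using H0 by (simp only: multiset.map_comp comp_def)
  qed (use cons ktA ktB in blast)+
  then show ?thesis unfolding HX_def by (simp only: multiset.map_comp comp_def map_map)
qed

end

definition dgx :: "nat \<Rightarrow> ('l,'c) pcol \<Rightarrow> ('l,'c) pcol" where
  "dgx k x = (SOME y. y \<in># msi x (k - 2) \<and> fst (snd (base y) (k - 2) (k - 1)))"

lemma dgx_col:
  assumes k: "2 \<le> k" and lt: "length t = k" and fin: "finite S" and w: "w \<in> S"
  shows "dgx k (col G S (Suc N) (t[k - 1 := Some w])) = col G S N (t[k - 1 := Some w, k - 2 := Some w])"
proof -
  let ?t = "t[k - 1 := Some w]"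
  have i: "k - 2 < length ?t" using k lt by simp
  have ms: "msi (col G S (Suc N) ?t) (k - 2) = image_mset (\<lambda>u. col G S N (?t[k - 2 := u])) (mset_set (insert None (Some ` S)))"
    by (rule msi_col[OF i])
  have P: "fst (snd (base (col G S N (?t[k - 2 := u]))) (k - 2) (k - 1)) \<longleftrightarrow> u = Some w" for u
    using k lt by (simp add: atpo_def zo_def nth_list_update)
  show ?thesis unfolding dgx_def ms
  proof (rule some_equality)
    show "col G S N (?t[k - 2 := Some w]) \<in># image_mset (\<lambda>u. col G S N (?t[k - 2 := u])) (mset_set (insert None (Some ` S))) \<and>
          fst (snd (base (col G S N (?t[k - 2 := Some w]))) (k - 2) (k - 1))"
      using fin w P by auto
    fix y assume y: "y \<in># image_mset (\<lambda>u. col G S N (?t[k - 2 := u])) (mset_set (insert None (Some ` S))) \<and>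
          fst (snd (base y) (k - 2) (k - 1))"
    then obtain u where "y = col G S N (?t[k - 2 := u])" by auto
    then show "y = col G S N (?t[k - 2 := Some w])" using y P by auto
  qed
qed

lemma upd_swap2: "k - 2 \<noteq> k - 1 \<Longrightarrow> t[k - 2 := a, k - 1 := b, k - 1 := c, k - 2 := d] = t[k - 2 := d, k - 1 := c]"
  by (simp add: list_update_swap)

lemma nbr_lemma:
  assumes k: "2 \<le> k" and lt: "length t = k" and fin: "finite S" and v: "v \<in> S"
  shows "image_mset (dgx k) (filter_mset (\<lambda>x. snd (snd (base x) (k - 2) (k - 1)) = Some c)
           (msi (col G S (Suc (Suc N)) (t[k - 2 := Some v, k - 1 := Some v])) (k - 1))) =
         image_mset (\<lambda>w. col G S N (t[k - 2 := Some w, k - 1 := Some w])) (mset_set {w \<in> S. edge G v w = Some c})"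
proof -
  let ?t = "t[k - 2 := Some v, k - 1 := Some v]"
  have i: "k - 1 < length ?t" using k lt by simp
  have ne: "k - 2 \<noteq> k - 1" using k by simp
  have ms: "msi (col G S (Suc (Suc N)) ?t) (k - 1) = image_mset (\<lambda>u. col G S (Suc N) (?t[k - 1 := u])) (mset_set (insert None (Some ` S)))"
    by (rule msi_col[OF i])
  have E: "snd (snd (base (col G S (Suc N) (?t[k - 1 := u]))) (k - 2) (k - 1)) = edgeo G (Some v) u" for u
    using k lt ne by (simp add: atpo_def zo_def nth_list_update)
  have fset: "{u \<in> insert None (Some ` S). edgeo G (Some v) u = Some c} = Some ` {w \<in> S. edge G v w = Some c}"
    by (auto simp: edgeo_def split: option.splits)
  have "filter_mset (\<lambda>x. snd (snd (base x) (k - 2) (k - 1)) = Some c) (msi (col G S (Suc (Suc N)) ?t) (k - 1)) =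
        image_mset (\<lambda>u. col G S (Suc N) (?t[k - 1 := u])) (mset_set (Some ` {w \<in> S. edge G v w = Some c}))"
    unfolding ms filter_mset_image_mset E filter_mset_mset_set[OF finite_insert[THEN iffD2, OF finite_imageI[OF fin]]] fset ..
  also have "\<dots> = image_mset (\<lambda>w. col G S (Suc N) (?t[k - 1 := Some w])) (mset_set {w \<in> S. edge G v w = Some c})"
  proof -
    have "mset_set (Some ` {w \<in> S. edge G v w = Some c}) = image_mset Some (mset_set {w \<in> S. edge G v w = Some c})"
      by (rule image_mset_mset_set[symmetric]) simp
    then show ?thesis by (simp only: multiset.map_comp comp_def)
  qed
  finally have 1: "filter_mset (\<lambda>x. snd (snd (base x) (k - 2) (k - 1)) = Some c) (msi (col G S (Suc (Suc N)) ?t) (k - 1)) =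
     image_mset (\<lambda>w. col G S (Suc N) (?t[k - 1 := Some w])) (mset_set {w \<in> S. edge G v w = Some c})" .
  have 2: "dgx k (col G S (Suc N) (?t[k - 1 := Some w])) = col G S N (t[k - 2 := Some w, k - 1 := Some w])"
    if "w \<in> S" for w
  proof -
    have L: "?t[k - 1 := Some w, k - 2 := Some w] = t[k - 2 := Some w, k - 1 := Some w]"
      using ne by (simp add: list_update_swap)
    have lt': "length ?t = k" using lt by simp
    show ?thesis using dgx_col[OF k lt' fin that, of G N] unfolding L .
  qed
  show ?thesis unfolding 1 multiset.map_comp comp_def
    by (rule image_mset_cong) (use 2 fin in auto)
qed

lemma allv_lemma:
  assumes k: "2 \<le> k" and lt: "length t = k" and fin: "finite S"
  shows "image_mset (dgx k) (filter_mset (\<lambda>x. fst (base x) (k - 1) \<noteq> None)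
           (msi (col G S (Suc (Suc N)) t) (k - 1))) =
         image_mset (\<lambda>w. col G S N (t[k - 2 := Some w, k - 1 := Some w])) (mset_set S)"
proof -
  have i: "k - 1 < length t" using k lt by simp
  have ne: "k - 2 \<noteq> k - 1" using k by simp
  have ms: "msi (col G S (Suc (Suc N)) t) (k - 1) = image_mset (\<lambda>u. col G S (Suc N) (t[k - 1 := u])) (mset_set (insert None (Some ` S)))"
    by (rule msi_col[OF i])
  have E: "fst (base (col G S (Suc N) (t[k - 1 := u]))) (k - 1) \<noteq> None \<longleftrightarrow> u \<noteq> None" for u
    using k lt by (simp add: atpo_def zo_def nth_list_update)
  have fset: "{u \<in> insert None (Some ` S). u \<noteq> None} = Some ` S" by auto
  have 1: "filter_mset (\<lambda>x. fst (base x) (k - 1) \<noteq> None) (msi (col G S (Suc (Suc N)) t) (k - 1)) =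
        image_mset (\<lambda>w. col G S (Suc N) (t[k - 1 := Some w])) (mset_set S)"
  proof -
    have "mset_set (Some ` S) = image_mset Some (mset_set S)"
      by (rule image_mset_mset_set[symmetric]) simp
    then show ?thesis
      unfolding ms filter_mset_image_mset E filter_mset_mset_set[OF finite_insert[THEN iffD2, OF finite_imageI[OF fin]]] fset
      by (simp only: multiset.map_comp comp_def)
  qed
  have 2: "dgx k (col G S (Suc N) (t[k - 1 := Some w])) = col G S N (t[k - 2 := Some w, k - 1 := Some w])"
    if "w \<in> S" for w
    using dgx_col[OF k lt fin that, of G N] ne by (simp add: list_update_swap)
  show ?thesis unfolding 1 multiset.map_comp comp_def
    by (rule image_mset_cong) (use 2 fin in auto)
qed

locale wlp = two Gf Gg k for Gf :: "('a,'l,'c) cgraph" and Gg :: "('b,'l,'c) cgraph" and k +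
  fixes UA :: "('a + 'b, 'l2, 'c) cgraph" and xh yh :: "('a + 'b) option list"
    and Lb :: "('l,'c) oatp \<Rightarrow> 'l2"
  assumes k2: "2 \<le> k" and vUA: "verts UA = verts U" and eUA: "edge UA = edge U"
    and lx: "length xh = k" and ly: "length yh = k"
    and labL: "\<And>v. v \<in> SL \<Longrightarrow> lab UA v = Lb (atpo U (xh[k - 2 := Some v, k - 1 := Some v]))"
    and labR: "\<And>v. v \<in> SR \<Longrightarrow> lab UA v = Lb (atpo U (yh[k - 2 := Some v, k - 1 := Some v]))"
    and coleq: "\<And>N. col U SL N xh = col U SR N yh"
begin

definition sd :: "'a + 'b \<Rightarrow> bool" where "sd v = (v \<in> SL)"
definition pre :: "bool \<Rightarrow> ('a + 'b) option list" where "pre s = (if s then xh else yh)"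
definition cw :: "nat \<Rightarrow> 'a + 'b \<Rightarrow> ('l,'c) pcol" where
  "cw N v = col U (Ss (sd v)) N ((pre (sd v))[k - 2 := Some v, k - 1 := Some v])"

lemma lpre: "length (pre s) = k" by (simp add: pre_def lx ly)

lemma sd_Ss: "v \<in> verts U \<Longrightarrow> v \<in> Ss (sd v)"
  by (auto simp: sd_def Ss_def verts_U)

lemma sd_eq: "v \<in> Ss s \<Longrightarrow> sd v = s"
  using disjLR by (cases s) (auto simp: sd_def Ss_def)

lemma lab_cw: "v \<in> verts U \<Longrightarrow> lab UA v = Lb (atpo U ((pre (sd v))[k - 2 := Some v, k - 1 := Some v]))"
  by (auto simp: sd_def pre_def verts_U labL labR)

lemma nbrs: "v \<in> verts U \<Longrightarrow> {w \<in> verts UA. edge UA v w = Some c} = {w \<in> Ss (sd v). edge U v w = Some c}"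
  unfolding vUA eUA verts_U sd_def Ss_def SL_def SR_def
  by (auto simp: edge_U1 edge_U2)

lemma cw_nbr: "v \<in> verts U \<Longrightarrow>
  image_mset (dgx k) (filter_mset (\<lambda>x. snd (snd (base x) (k - 2) (k - 1)) = Some c) (msi (cw (Suc (Suc N)) v) (k - 1)))
  = image_mset (cw N) (mset_set {w \<in> Ss (sd v). edge U v w = Some c})"
proof -
  assume v: "v \<in> verts U"
  have "image_mset (dgx k) (filter_mset (\<lambda>x. snd (snd (base x) (k - 2) (k - 1)) = Some c) (msi (cw (Suc (Suc N)) v) (k - 1)))
     = image_mset (\<lambda>w. col U (Ss (sd v)) N ((pre (sd v))[k - 2 := Some w, k - 1 := Some w])) (mset_set {w \<in> Ss (sd v). edge U v w = Some c})"
    unfolding cw_def by (rule nbr_lemma[OF k2 lpre finSs sd_Ss[OF v]])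
  also have "\<dots> = image_mset (cw N) (mset_set {w \<in> Ss (sd v). edge U v w = Some c})"
    by (rule image_mset_cong) (use finSs sd_eq in \<open>auto simp: cw_def\<close>)
  finally show ?thesis .
qed

lemma W: "v \<in> verts U \<Longrightarrow> v' \<in> verts U \<Longrightarrow> cw (2 * n) v = cw (2 * n) v' \<Longrightarrow> wl_col UA n v = wl_col UA n v'"
proof (induction n arbitrary: v v')
  case 0
  then have "atpo U ((pre (sd v))[k - 2 := Some v, k - 1 := Some v]) = atpo U ((pre (sd v'))[k - 2 := Some v', k - 1 := Some v'])"
    by (simp add: cw_def)
  then show ?case using 0 by (simp add: lab_cw)
next
  case (Suc n)
  have e: "cw (Suc (Suc (2 * n))) v = cw (Suc (Suc (2 * n))) v'" using Suc.prems by simp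
  have e0: "cw (2 * n) v = cw (2 * n) v'"
    using arg_cong[OF arg_cong[OF e, of prev], of prev] unfolding cw_def prev_col .
  have nb: "image_mset (wl_col UA n) (mset_set {w \<in> verts UA. edge UA v w = Some c}) =
            image_mset (wl_col UA n) (mset_set {w \<in> verts UA. edge UA v' w = Some c})" for c
  proof -
    have m: "image_mset (cw (2 * n)) (mset_set {w \<in> Ss (sd v). edge U v w = Some c}) =
             image_mset (cw (2 * n)) (mset_set {w \<in> Ss (sd v'). edge U v' w = Some c})"
      using cw_nbr[OF Suc.prems(1), of c "2 * n"] cw_nbr[OF Suc.prems(2), of c "2 * n"] e by simp
    have memv: "x \<in> verts U" if a: "x \<in># mset_set {w \<in> Ss s. edge U u w = Some c}" for x s u
    proof -
      have "finite {w \<in> Ss s. edge U u w = Some c}" using finSs by simp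
      then have "x \<in> Ss s" using a by simp
      then show ?thesis by (cases s) (auto simp: Ss_def verts_U)
    qed
    show ?thesis unfolding nbrs[OF Suc.prems(1)] nbrs[OF Suc.prems(2)]
      by (rule GL2[where k = "cw (2 * n)", OF _ _ _ m]) (use Suc.IH memv in blast)+
  qed
  show ?case using Suc.IH[OF Suc.prems(1,2) e0] nb by (simp add: fun_eq_iff)
qed

lemma all_eq: "image_mset (cw N) (mset_set SL) = image_mset (cw N) (mset_set SR)"
proof -
  have 1: "image_mset (cw N) (mset_set (Ss s)) =
    image_mset (dgx k) (filter_mset (\<lambda>x. fst (base x) (k - 1) \<noteq> None) (msi (col U (Ss s) (Suc (Suc N)) (pre s)) (k - 1)))" for s
    unfolding allv_lemma[OF k2 lpre finSs]
    by (rule image_mset_cong) (use finSs sd_eq in \<open>auto simp: cw_def\<close>)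
  have "col U (Ss True) (Suc (Suc N)) (pre True) = col U (Ss False) (Suc (Suc N)) (pre False)"
    unfolding Ss_def pre_def if_True if_False by (rule coleq)
  then have "image_mset (cw N) (mset_set (Ss True)) = image_mset (cw N) (mset_set (Ss False))"
    unfolding 1 by simp
  then show ?thesis by (simp add: Ss_def)
qed

lemma wl_eq: "image_mset (wl_col UA n) (mset_set SL) = image_mset (wl_col UA n) (mset_set SR)"
proof (rule GL2[where k = "cw (2 * n)", OF _ _ _ all_eq])
  have m: "x \<in># mset_set SL \<Longrightarrow> x \<in> verts U" "x \<in># mset_set SR \<Longrightarrow> x \<in> verts U" for x
    using elem_mset_set[OF finSL] elem_mset_set[OF finSR] verts_U by blast+
  show "\<And>x y. x \<in># mset_set SL \<Longrightarrow> y \<in># mset_set SR \<Longrightarrow> cw (2 * n) x = cw (2 * n) y \<Longrightarrow> wl_col UA n x = wl_col UA n y"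
    using W m by blast
  show "\<And>x y. x \<in># mset_set SL \<Longrightarrow> y \<in># mset_set SL \<Longrightarrow> cw (2 * n) x = cw (2 * n) y \<Longrightarrow> wl_col UA n x = wl_col UA n y"
    using W m by blast
  show "\<And>x y. x \<in># mset_set SR \<Longrightarrow> y \<in># mset_set SR \<Longrightarrow> cw (2 * n) x = cw (2 * n) y \<Longrightarrow> wl_col UA n x = wl_col UA n y"
    using W m by blast
qed

lemma card_eq: "card {v \<in> verts Gf. wl_col UA n (Inl v) = c} = card {v \<in> verts Gg. wl_col UA n (Inr v) = c}"
proof -
  have a: "image_mset (wl_col UA n) (mset_set SL) = image_mset (\<lambda>v. wl_col UA n (Inl v)) (mset_set (verts Gf))"
    unfolding SL_def by (simp add: image_mset_mset_set[symmetric] multiset.map_comp comp_def)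
  have b: "image_mset (wl_col UA n) (mset_set SR) = image_mset (\<lambda>v. wl_col UA n (Inr v)) (mset_set (verts Gg))"
    unfolding SR_def by (simp add: image_mset_mset_set[symmetric] multiset.map_comp comp_def)
  have "count (image_mset (\<lambda>v. wl_col UA n (Inl v)) (mset_set (verts Gf))) c =
        count (image_mset (\<lambda>v. wl_col UA n (Inr v)) (mset_set (verts Gg))) c"
    using wl_eq[of n] unfolding a b by (rule arg_cong)
  then show ?thesis by (simp add: count_image_mset_set finf fing)
qed

end

context two
begin

lemma matched:
  assumes nd: "\<not> kwl_distinguishes k Gf Gg" and xs: "xs0 \<in> ktuples k (verts Gf)"
  shows "\<exists>ys0 \<in> ktuples k (verts Gg). \<forall>n. col U SL n (map Some (map Inl xs0)) = col U SR n (map Some (map Inr ys0))"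
proof -
  let ?M = "kwl_stable_round k U"
  let ?c = "kwl_col k U ?M (map Inl xs0)"
  have cnt: "card {vs \<in> ktuples k (verts Gf). kwl_col k U ?M (map Inl vs) = ?c} =
             card {vs \<in> ktuples k (verts Gg). kwl_col k U ?M (map Inr vs) = ?c}"
    using nd unfolding kwl_distinguishes_def Let_def U_def by auto
  have "card {vs \<in> ktuples k (verts Gf). kwl_col k U ?M (map Inl vs) = ?c} \<noteq> 0"
    using xs finite_ktuples[OF finf] by (subst card_0_eq) auto
  then have "{vs \<in> ktuples k (verts Gg). kwl_col k U ?M (map Inr vs) = ?c} \<noteq> {}"
    using cnt by (metis (no_types, lifting) card.empty)
  then obtain ys0 where ys: "ys0 \<in> ktuples k (verts Gg)" and e: "kwl_col k U ?M (map Inr ys0) = ?c" by auto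
  have xU: "map Inl xs0 \<in> ktuples k (verts U)" using xs by (auto simp: ktuples_def verts_U SL_def)
  have yU: "map Inr ys0 \<in> ktuples k (verts U)" using ys by (auto simp: ktuples_def verts_U SR_def)
  have colk: "col U (verts U) n (map Some x) = Dk k {} n (kwl_col k U n x)" if "x \<in> ktuples k (verts U)" for x n
    using col_kwl[OF finV, of x k n "{}"] that by (auto simp: ktuples_def)
  have "col U (verts U) n (map Some (map Inl xs0)) = col U (verts U) n (map Some (map Inr ys0))" for n
    using colk[OF xU] colk[OF yU] kwl_stable[OF finV xU yU, of n] e by simp
  moreover have "Qn n" for n using Q_all HX_from_kwl[OF nd] by blast
  ultimately have "col U (Ss True) n (map Some (map Inl xs0)) = col U (Ss False) n (map Some (map Inr ys0))" for n
    using pure_Inl[OF xs] pure_Inr[OF ys] unfolding Qn_def by blast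
  then show ?thesis using ys by (auto simp: Ss_def)
qed

end

lemma verts_LCN_assign: "verts (LCN_assign F \<rho>) = Inl ` {(i, p). i < nvars F} \<union> Inr ` clauses F"
  by (simp add: LCN_assign_def)
lemma verts_LCN: "verts (LCN F) = Inl ` {(i, p). i < nvars F} \<union> Inr ` clauses F"
  by (simp add: LCN_def LCN_assign_def)
lemma edge_LCN_assign: "edge (LCN_assign F \<rho>) = edge (LCN F)"
  by (simp add: LCN_def LCN_assign_def)
lemma lab_LCN_Inl: "lab (LCN_assign F \<rho>) (Inl (i, p)) = (case \<rho> i of None \<Rightarrow> None | Some b \<Rightarrow> Some (b = p))"
  by (simp add: LCN_assign_def)
lemma lab_LCN_Inr: "lab (LCN_assign F \<rho>) (Inr c) = None"
  by (simp add: LCN_assign_def)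

lemma edge_LitLit: "edge (LCN F) x y = Some LitLit \<Longrightarrow> \<exists>i p. x = Inl (i, p) \<and> y = Inl (i, \<not> p)"
  unfolding LCN_def LCN_assign_def
  by (auto split: sum.splits if_splits simp: split_beta)

lemma edge_lits: "edge (LCN F) (Inl (i, p)) (Inl (i, \<not> p)) = Some LitLit"
  by (simp add: LCN_def LCN_assign_def)

lemma fin_LCN: "wf_cnf F \<Longrightarrow> finite (verts (LCN F))"
proof -
  assume "wf_cnf F"
  moreover have "{(i, p). i < nvars F} = {..<nvars F} \<times> (UNIV :: bool set)" by auto
  ultimately show ?thesis by (simp add: verts_LCN wf_cnf_def)
qed

lemma LBL:
  assumes len: "length zl = 2 * m"
    and pairs: "\<And>t. t < m \<Longrightarrow> \<exists>i p. zl ! (2 * t) = Inl (i, p) \<and> zl ! (2 * t + 1) = Inl (i, \<not> p) \<and> \<rho> i = Some p"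
    and cov: "\<And>i b. \<rho> i = Some b \<Longrightarrow> Inl (i, b) \<in> set zl"
  shows "j < 2 * m \<Longrightarrow> lab (LCN_assign F \<rho>) (zl ! j) = Some (even j)"
    and "x \<notin> set zl \<Longrightarrow> lab (LCN_assign F \<rho>) x = None"
proof -
  assume j: "j < 2 * m"
  show "lab (LCN_assign F \<rho>) (zl ! j) = Some (even j)"
  proof (cases "even j")
    case True
    then obtain t where t: "j = 2 * t" by (auto elim: evenE)
    then have "t < m" using j by simp
    then show ?thesis using pairs[of t] t by (auto simp: lab_LCN_Inl)
  next
    case False
    then obtain t where t: "j = 2 * t + 1" by (auto elim: oddE)
    then have "t < m" using j by simp
    then show ?thesis using pairs[of t] t by (auto simp: lab_LCN_Inl)
  qed
next
  assume x: "x \<notin> set zl"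
  show "lab (LCN_assign F \<rho>) x = None"
  proof (cases x)
    case (Inr c) then show ?thesis by (simp add: lab_LCN_Inr)
  next
    case (Inl l)
    obtain i q where l: "l = (i, q)" by (cases l)
    show ?thesis
    proof (cases "\<rho> i")
      case None then show ?thesis using Inl l by (simp add: lab_LCN_Inl)
    next
      case (Some b)
      then have "Inl (i, b) \<in> set zl" by (rule cov)
      then obtain j where j: "j < length zl" "zl ! j = Inl (i, b)" by (auto simp: in_set_conv_nth)
      have False
      proof (cases "even j")
        case True
        then obtain t where t: "j = 2 * t" by (auto elim: evenE)
        then have tm: "t < m" using j len by simp
        obtain i' p where P: "zl ! (2 * t) = Inl (i', p)" "zl ! (2 * t + 1) = Inl (i', \<not> p)" "\<rho> i' = Some p"
          using pairs[OF tm] by blast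
        have "i' = i" "p = b" using P j t by auto
        moreover have "zl ! (2 * t) \<in> set zl" "zl ! (2 * t + 1) \<in> set zl" using tm len by simp_all
        ultimately have "Inl (i, b) \<in> set zl \<and> Inl (i, \<not> b) \<in> set zl" using P by simp
        moreover have "x = Inl (i, b) \<or> x = Inl (i, \<not> b)" using Inl l by (cases q; cases b) auto
        ultimately show False using x by auto
      next
        case False
        then obtain t where t: "j = 2 * t + 1" by (auto elim: oddE)
        then have tm: "t < m" using j len by simp
        obtain i' p where P: "zl ! (2 * t) = Inl (i', p)" "zl ! (2 * t + 1) = Inl (i', \<not> p)" "\<rho> i' = Some p"
          using pairs[OF tm] by blast
        then show False using j t Some by auto
      qed
      then show ?thesis ..
    qed
  qed
qed

lemma concat_pairs_nth:
  "t < length vs \<Longrightarrow> concat (map (\<lambda>i. [a i, b i]) vs) ! (2 * t) = a (vs ! t) \<and>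
                      concat (map (\<lambda>i. [a i, b i]) vs) ! (2 * t + 1) = b (vs ! t)"
proof (induction vs arbitrary: t)
  case Nil then show ?case by simp
next
  case (Cons v vs)
  show ?case
  proof (cases t)
    case 0 then show ?thesis by simp
  next
    case (Suc t')
    then have "t' < length vs" using Cons.prems by simp
    then show ?thesis using Cons.IH[of t'] Suc by simp
  qed
qed

lemma length_concat_pairs: "length (concat (map (\<lambda>i. [a i, b i]) vs)) = 2 * length vs"
  by (induction vs) auto

definition Lbm :: "nat \<Rightarrow> nat \<Rightarrow> ('l,'c) oatp \<Rightarrow> bool option" where
  "Lbm m k a = (if \<exists>j<2 * m. fst (snd a j (k - 1)) then Some (even (LEAST j. j < 2 * m \<and> fst (snd a j (k - 1)))) else None)"

lemma Lb_lemma: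
  assumes len: "length zl = 2 * m"
    and pairs: "\<And>t. t < m \<Longrightarrow> \<exists>i p. zl ! (2 * t) = Inl (i, p) \<and> zl ! (2 * t + 1) = Inl (i, \<not> p) \<and> \<rho> i = Some p"
    and cov: "\<And>i b. \<rho> i = Some b \<Longrightarrow> Inl (i, b) \<in> set zl"
    and mk: "2 * m \<le> k - 2" and k2: "2 \<le> k" and lh: "length h = k"
    and hj: "\<And>j. j < 2 * m \<Longrightarrow> h ! j = Some (ij (zl ! j))" and inj: "inj ij"
  shows "lab (LCN_assign F \<rho>) x = Lbm m k (atpo G (h[k - 2 := Some (ij x), k - 1 := Some (ij x)]))"
proof -
  let ?h = "h[k - 2 := Some (ij x), k - 1 := Some (ij x)]"
  have c: "fst (snd (atpo G ?h) j (k - 1)) \<longleftrightarrow> zl ! j = x" if j: "j < 2 * m" for j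
  proof -
    have "zo ?h j = Some (ij (zl ! j))" using j mk k2 lh hj by (simp add: zo_def nth_list_update)
    moreover have "zo ?h (k - 1) = Some (ij x)" using k2 lh by (simp add: zo_def nth_list_update)
    ultimately show ?thesis using inj by (simp add: atpo_def inj_eq)
  qed
  show ?thesis
  proof (cases "\<exists>j<2 * m. zl ! j = x")
    case True
    define j0 where "j0 = (LEAST j. j < 2 * m \<and> zl ! j = x)"
    have j0: "j0 < 2 * m \<and> zl ! j0 = x" unfolding j0_def using True by (metis (mono_tags, lifting) LeastI)
    have L: "(LEAST j. j < 2 * m \<and> fst (snd (atpo G ?h) j (k - 1))) = j0"
      unfolding j0_def by (rule arg_cong[where f = Least]) (use c in auto)
    have "lab (LCN_assign F \<rho>) x = Some (even j0)" using LBL(1)[OF len pairs cov, of j0 F] j0 by blast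
    then show ?thesis unfolding Lbm_def L using True c by auto
  next
    case False
    then have "x \<notin> set zl" using len by (auto simp: in_set_conv_nth)
    then have "lab (LCN_assign F \<rho>) x = None" using LBL(2)[OF len pairs cov] by blast
    then show ?thesis unfolding Lbm_def using False c by auto
  qed
qed

theorem lemma1:
  fixes k :: nat and f g :: cnf and \<sigma> :: "nat \<rightharpoonup> bool"
  assumes "k \<ge> 4"
    and "wf_cnf f" and "wf_cnf g"
    and "\<not> kwl_distinguishes k (LCN f) (LCN g)"
    and "dom \<sigma> \<subseteq> {..<nvars f}"
    and "card (dom \<sigma>) \<le> k div 2 - 1"
  shows "\<exists>\<tau> :: nat \<rightharpoonup> bool. dom \<tau> \<subseteq> {..<nvars g} \<and>
           \<not> wl_distinguishes (LCN_assign f \<sigma>) (LCN_assign g \<tau>)"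
proof -
  note k4 = assms(1) and wff = assms(2) and wfg = assms(3) and nd = assms(4) and domf = assms(5) and cardf = assms(6)
  have k0: "0 < k" and k2: "2 \<le> k" using k4 by auto
  have finf: "finite (verts (LCN f))" by (rule fin_LCN[OF wff])
  have fing: "finite (verts (LCN g))" by (rule fin_LCN[OF wfg])
  interpret T: two "LCN f" "LCN g" k by unfold_locales (use finf fing k0 in auto)
  have vA: "verts (LCN_assign F \<rho>) = verts (LCN F)" for F \<rho> by (simp add: verts_LCN_assign verts_LCN)
  show ?thesis
  proof (cases "verts (LCN f) = {}")
    case True
    have g0: "verts (LCN g) = {}"
    proof (rule ccontr)
      assume "verts (LCN g) \<noteq> {}"
      then obtain y where y: "y \<in> verts (LCN g)" by blast
      let ?M = "kwl_stable_round k (disj_union (LCN f) (LCN g))"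
      let ?c = "kwl_col k (disj_union (LCN f) (LCN g)) ?M (map Inr (replicate k y))"
      have "replicate k y \<in> ktuples k (verts (LCN g))" using y by (auto simp: ktuples_def)
      then have "card {vs \<in> ktuples k (verts (LCN g)). kwl_col k (disj_union (LCN f) (LCN g)) ?M (map Inr vs) = ?c} \<noteq> 0"
        using finite_ktuples[OF fing] by (subst card_0_eq) auto
      moreover have "ktuples k (verts (LCN f)) = {}" using True k0 by (auto simp: ktuples_def)
      ultimately show False using nd unfolding kwl_distinguishes_def Let_def by auto
    qed
    show ?thesis
    proof (intro exI conjI)
      show "dom (Map.empty :: nat \<rightharpoonup> bool) \<subseteq> {..<nvars g}" by simp
      show "\<not> wl_distinguishes (LCN_assign f \<sigma>) (LCN_assign g Map.empty)"
        unfolding wl_distinguishes_def Let_def vA True g0 by simp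
    qed
  next
    case False
    then obtain p0 where p0: "p0 \<in> verts (LCN f)" by blast
    have findom: "finite (dom \<sigma>)" using domf finite_subset by blast
    define vars where "vars = sorted_list_of_set (dom \<sigma>)"
    define m where "m = length vars"
    have setvars: "set vars = dom \<sigma>" using findom by (simp add: vars_def)
    have mcard: "m = card (dom \<sigma>)" using findom by (simp add: m_def vars_def)
    have mk: "2 * m \<le> k - 2" using cardf k4 mcard by (simp add: mcard)
    define zlf :: "((nat \<times> bool) + (nat \<times> bool) set) list"
      where "zlf = concat (map (\<lambda>i. [Inl (i, the (\<sigma> i)), Inl (i, \<not> the (\<sigma> i))]) vars)"
    have lzlf: "length zlf = 2 * m" unfolding zlf_def m_def by (rule length_concat_pairs)
    have zlf_nth: "zlf ! (2 * t) = Inl (vars ! t, the (\<sigma> (vars ! t))) \<and> zlf ! (2 * t + 1) = Inl (vars ! t, \<not> the (\<sigma> (vars ! t)))"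
      if "t < m" for t
      using concat_pairs_nth[of t vars] that unfolding zlf_def m_def by simp
    have varsd: "vars ! t \<in> dom \<sigma>" if "t < m" for t using that setvars m_def nth_mem by blast
    have zlf_j: "\<exists>b. zlf ! j = Inl (vars ! (j div 2), b)" if j: "j < 2 * m" for j
    proof (cases "even j")
      case True
      then have "j = 2 * (j div 2)" by simp
      moreover have "j div 2 < m" using j by simp
      ultimately show ?thesis using zlf_nth[of "j div 2"] by metis
    next
      case False
      then have "j = 2 * (j div 2) + 1" by simp
      moreover have "j div 2 < m" using j by simp
      ultimately show ?thesis using zlf_nth[of "j div 2"] by metis
    qed
    have zlf_verts: "set zlf \<subseteq> verts (LCN f)"
    proof
      fix x assume "x \<in> set zlf"
      then obtain j where j: "j < 2 * m" "zlf ! j = x" using lzlf by (auto simp: in_set_conv_nth)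
      obtain b where b: "x = Inl (vars ! (j div 2), b)" using zlf_j[OF j(1)] j(2) by metis
      have "vars ! (j div 2) \<in> dom \<sigma>" using varsd[of "j div 2"] j(1) by simp
      then have "vars ! (j div 2) < nvars f" using domf by auto
      then show "x \<in> verts (LCN f)" using b by (simp add: verts_LCN)
    qed
    define xs0 where "xs0 = zlf @ replicate (k - 2 * m) p0"
    have lxs0: "length xs0 = k" using mk k2 lzlf by (simp add: xs0_def)
    have xs0_kt: "xs0 \<in> ktuples k (verts (LCN f))"
      using lxs0 zlf_verts p0 by (auto simp: ktuples_def xs0_def)
    have xs0_j: "xs0 ! j = zlf ! j" if "j < 2 * m" for j using that lzlf by (simp add: xs0_def nth_append)
    obtain ys0 where ys0_kt: "ys0 \<in> ktuples k (verts (LCN g))"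
      and ceq: "\<And>n. col T.U T.SL n (map Some (map Inl xs0)) = col T.U T.SR n (map Some (map Inr ys0))"
      using T.matched[OF nd xs0_kt] by blast
    have lys0: "length ys0 = k" using ys0_kt by (simp add: ktuples_def)
    define J where "J = {2 * m..<k}"
    define xh :: "((nat \<times> bool + (nat \<times> bool) set) + (nat \<times> bool + (nat \<times> bool) set)) option list" where "xh = maskl J (map Some (map Inl xs0))"
    define yh :: "((nat \<times> bool + (nat \<times> bool) set) + (nat \<times> bool + (nat \<times> bool) set)) option list" where "yh = maskl J (map Some (map Inr ys0))"
    have coleq: "col T.U T.SL N xh = col T.U T.SR N yh" for N
      unfolding xh_def yh_def col_maskl ceq ..
    have aeq: "atpo T.U xh = atpo T.U yh" using coleq[of 0] by simp
    have lxh: "length xh = k" and lyh: "length yh = k" by (simp_all add: xh_def yh_def lxs0 lys0)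
    have xhj: "xh ! j = Some (Inl (zlf ! j))" if "j < 2 * m" for j
      using that mk lxs0 xs0_j by (simp add: xh_def maskl_def J_def)
    have yhj: "yh ! j = Some (Inr (ys0 ! j))" if "j < 2 * m" for j
      using that mk lys0 by (simp add: yh_def maskl_def J_def)
    have eU1: "edge T.U (Inl x) (Inl y) = edge (LCN f) x y" for x y by (simp add: T.U_def disj_union_def)
    have eU2: "edge T.U (Inr x) (Inr y) = edge (LCN g) x y" for x y by (simp add: T.U_def disj_union_def)
    have eqv: "(zlf ! a = zlf ! b) \<longleftrightarrow> (ys0 ! a = ys0 ! b)" if "a < 2 * m" "b < 2 * m" for a b
    proof -
      have "fst (snd (atpo T.U xh) a b) = fst (snd (atpo T.U yh) a b)" using aeq by simp
      moreover have "a < k" "b < k" using that mk by auto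
      ultimately show ?thesis using xhj[OF that(1)] xhj[OF that(2)] yhj[OF that(1)] yhj[OF that(2)] lxh lyh
        by (simp add: atpo_def zo_def)
    qed
    have eeq: "edge (LCN f) (zlf ! a) (zlf ! b) = edge (LCN g) (ys0 ! a) (ys0 ! b)" if "a < 2 * m" "b < 2 * m" for a b
    proof -
      have "snd (snd (atpo T.U xh) a b) = snd (snd (atpo T.U yh) a b)" using aeq by simp
      moreover have "a < k" "b < k" using that mk by auto
      ultimately show ?thesis using xhj[OF that(1)] xhj[OF that(2)] yhj[OF that(1)] yhj[OF that(2)] lxh lyh
        by (simp add: atpo_def zo_def edgeo_def eU1 eU2)
    qed
    define var where "var t = fst (projl (ys0 ! (2 * t)))" for t
    define pol where "pol t = snd (projl (ys0 ! (2 * t)))" for t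
    have ysp: "ys0 ! (2 * t) = Inl (var t, pol t) \<and> ys0 ! (2 * t + 1) = Inl (var t, \<not> pol t)" if t: "t < m" for t
    proof -
      have "edge (LCN g) (ys0 ! (2 * t)) (ys0 ! (2 * t + 1)) = Some LitLit"
        using eeq[of "2 * t" "2 * t + 1"] t zlf_nth[OF t] edge_lits by simp
      then obtain i p where "ys0 ! (2 * t) = Inl (i, p)" "ys0 ! (2 * t + 1) = Inl (i, \<not> p)"
        using edge_LitLit by blast
      then show ?thesis by (simp add: var_def pol_def)
    qed
    have cons: "pol t = pol t'" if t: "t < m" and t': "t' < m" and v: "var t = var t'" for t t'
    proof (rule ccontr)
      assume ne: "pol t \<noteq> pol t'"
      have "ys0 ! (2 * t') = ys0 ! (2 * t + 1)" using ysp[OF t] ysp[OF t'] v ne by auto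
      then have "zlf ! (2 * t') = zlf ! (2 * t + 1)" using eqv[of "2 * t'" "2 * t + 1"] t t' by simp
      then show False using zlf_nth[OF t] zlf_nth[OF t'] by auto
    qed
    define \<tau> where "\<tau> i = (if \<exists>t<m. var t = i then Some (pol (SOME t. t < m \<and> var t = i)) else None)" for i
    have \<tau>var: "\<tau> (var t) = Some (pol t)" if t: "t < m" for t
    proof -
      have ex: "\<exists>t'. t' < m \<and> var t' = var t" using t by blast
      define t0 where "t0 = (SOME t'. t' < m \<and> var t' = var t)"
      have t0: "t0 < m \<and> var t0 = var t" unfolding t0_def by (rule someI_ex[OF ex])
      have p: "pol t0 = pol t" using cons[of t0 t] t0 t by blast
      have ex': "\<exists>t'<m. var t' = var t" using t by blast
      have "\<tau> (var t) = Some (pol t0)" unfolding \<tau>_def t0_def using ex' by (simp only: if_True)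
      then show ?thesis using p by simp
    qed
    have \<tau>some: "\<exists>t<m. var t = i \<and> b = pol t" if "\<tau> i = Some b" for i b
    proof -
      have ex: "\<exists>t<m. var t = i" using that by (auto simp: \<tau>_def split: if_splits)
      then obtain t where "t < m" "var t = i" by blast
      then show ?thesis using \<tau>var that by force
    qed
    have dom\<tau>: "dom \<tau> \<subseteq> {..<nvars g}"
    proof
      fix i assume "i \<in> dom \<tau>"
      then obtain b where "\<tau> i = Some b" by auto
      then obtain t where t: "t < m" "var t = i" using \<tau>some by blast
      have "ys0 ! (2 * t) \<in> verts (LCN g)" using ys0_kt t mk lys0 by (auto simp: ktuples_def)
      then show "i \<in> {..<nvars g}" using ysp[OF t(1)] t(2) by (auto simp: verts_LCN)
    qed
    define zlg where "zlg = take (2 * m) ys0"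
    have lzlg: "length zlg = 2 * m" using lys0 mk by (simp add: zlg_def)
    have zlg_j: "zlg ! j = ys0 ! j" if "j < 2 * m" for j using that by (simp add: zlg_def)
    have pairsf: "\<exists>i p. zlf ! (2 * t) = Inl (i, p) \<and> zlf ! (2 * t + 1) = Inl (i, \<not> p) \<and> \<sigma> i = Some p"
      if t: "t < m" for t
      using zlf_nth[OF t] varsd[OF t] by auto
    have covf: "Inl (i, b) \<in> set zlf" if "\<sigma> i = Some b" for i b
    proof -
      have "i \<in> set vars" using that setvars by auto
      then obtain t where t: "t < m" "vars ! t = i" by (auto simp: in_set_conv_nth m_def)
      then have "zlf ! (2 * t) = Inl (i, b)" using zlf_nth[OF t(1)] that by simp
      moreover have "2 * t < length zlf" using t lzlf by simp
      ultimately show ?thesis by (metis nth_mem)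
    qed
    have pairsg: "\<exists>i p. zlg ! (2 * t) = Inl (i, p) \<and> zlg ! (2 * t + 1) = Inl (i, \<not> p) \<and> \<tau> i = Some p"
      if t: "t < m" for t
      using ysp[OF t] \<tau>var[OF t] zlg_j[of "2 * t"] zlg_j[of "2 * t + 1"] t by auto
    have covg: "Inl (i, b) \<in> set zlg" if "\<tau> i = Some b" for i b
    proof -
      have "\<exists>t<m. var t = i \<and> b = pol t" by (rule \<tau>some[OF that])
      then obtain t where t: "t < m" "var t = i" "b = pol t" by blast
      then have "zlg ! (2 * t) = Inl (i, b)" using ysp[OF t(1)] zlg_j[of "2 * t"] by simp
      moreover have "2 * t < length zlg" using t lzlg by simp
      ultimately show ?thesis by (metis nth_mem)
    qed
    define UA where "UA = disj_union (LCN_assign f \<sigma>) (LCN_assign g \<tau>)"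
    have labL: "lab UA v = Lbm m k (atpo T.U (xh[k - 2 := Some v, k - 1 := Some v]))" if vS: "v \<in> T.SL" for v
    proof -
      obtain x where x: "v = Inl x" using vS by (auto simp: T.SL_def)
      have "lab (LCN_assign f \<sigma>) x = Lbm m k (atpo T.U (xh[k - 2 := Some (Inl x), k - 1 := Some (Inl x)]))"
        by (rule Lb_lemma[OF lzlf pairsf covf mk k2 lxh xhj]) (auto simp: inj_def)
      then show ?thesis using x by (simp add: UA_def disj_union_def)
    qed
    have labR: "lab UA v = Lbm m k (atpo T.U (yh[k - 2 := Some v, k - 1 := Some v]))" if vS: "v \<in> T.SR" for v
    proof -
      obtain x where x: "v = Inr x" using vS by (auto simp: T.SR_def)
      have yhj': "yh ! j = Some (Inr (zlg ! j))" if "j < 2 * m" for j using yhj[OF that] zlg_j[OF that] by simp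
      have "lab (LCN_assign g \<tau>) x = Lbm m k (atpo T.U (yh[k - 2 := Some (Inr x), k - 1 := Some (Inr x)]))"
        by (rule Lb_lemma[OF lzlg pairsg covg mk k2 lyh yhj']) (auto simp: inj_def)
      then show ?thesis using x by (simp add: UA_def disj_union_def)
    qed
    have vUA: "verts UA = verts T.U" by (simp add: UA_def T.U_def disj_union_def vA)
    have eUA: "edge UA = edge T.U"
      unfolding UA_def T.U_def disj_union_def cgraph.select_convs edge_LCN_assign by (rule refl)
    interpret W: wlp "LCN f" "LCN g" k UA xh yh "Lbm m k"
      by unfold_locales (use k2 vUA eUA lxh lyh labL labR coleq in auto)
    have "\<not> wl_distinguishes (LCN_assign f \<sigma>) (LCN_assign g \<tau>)"
      unfolding wl_distinguishes_def Let_def vA UA_def[symmetric]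
      using W.card_eq by simp
    then show ?thesis using dom\<tau> by blast
  qed
qed

end
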